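(* Let $n=2$, let $H$ be a constant with $|H|<1$, and let $\varphi\in C^5((-1,1))$. Write points of $\mathbb R^2$ as $(x_1,x_2)$ and let $$Q(u)=\Delta u-\frac{u_iu_j}{1+|Du|^2}u_{ij}-\frac{2}{x_2}\Big(u_2-H\sqrt{1+|Du|^2}\Big).$$ Suppose $c_1,c_2,c_{3,1}\in C^2((-1,1))$ are functions of $x_1$ such that, for $$u_*=\varphi(x_1)+c_1(x_1)x_2+c_2(x_1)x_2^2+c_{3,1}(x_1)x_2^3\log x_2,$$ one has $Q(u_* )(x_1,x_2)=o(x_2)$ as $x_2\to0^+$ for each $x_1\in(-1,1)$. Then $c_{3,1}\equiv0$.
   Context: Subscripts denote partial derivatives and repeated indices are summed over $1,2$. The functions $c_1,c_2,c_{3,1}$ are the coefficients of the formal boundary expansion of solutions of $Q(u)=0$ with $u=\varphi$ on $\{x_2=0\}$; they are determined by requiring that the coefficients of $x_2^{-1}$, $x_2^0$ and $x_2^1$ in the expansion of $Q(u_* )$ vanish (in particular $c_1=\frac{H}{\sqrt{1-H^2}}\sqrt{1+\varphi'^2}$). *)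

theory Defs
  imports "HOL-Analysis.Analysis" "HOL-Library.Landau_Symbols"
begin

definition Ck_on :: "nat \<Rightarrow> (real \<Rightarrow> real) \<Rightarrow> real set \<Rightarrow> bool" where
  "Ck_on k f S \<longleftrightarrow>
     (\<forall>j<k. \<forall>x\<in>S. ((deriv ^^ j) f) differentiable (at x)) \<and> continuous_on S ((deriv ^^ k) f)"

definition pd1 :: "(real \<Rightarrow> real \<Rightarrow> real) \<Rightarrow> real \<Rightarrow> real \<Rightarrow> real" where
  "pd1 u x1 x2 = deriv (\<lambda>s. u s x2) x1"

definition pd2 :: "(real \<Rightarrow> real \<Rightarrow> real) \<Rightarrow> real \<Rightarrow> real \<Rightarrow> real" where
  "pd2 u x1 x2 = deriv (\<lambda>t. u x1 t) x2"

definition Qop :: "real \<Rightarrow> (real \<Rightarrow> real \<Rightarrow> real) \<Rightarrow> real \<Rightarrow> real \<Rightarrow> real" where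
  "Qop H u x1 x2 =
     (let u1 = pd1 u x1 x2; u2 = pd2 u x1 x2;
          u11 = pd1 (pd1 u) x1 x2; u12 = pd2 (pd1 u) x1 x2;
          u21 = pd1 (pd2 u) x1 x2; u22 = pd2 (pd2 u) x1 x2;
          W2 = 1 + u1\<^sup>2 + u2\<^sup>2
      in (u11 + u22) - (u1 * u1 * u11 + u1 * u2 * u12 + u2 * u1 * u21 + u2 * u2 * u22) / W2
         - 2 / x2 * (u2 - H * sqrt W2))"

end

theory Submission
  imports Defs "HOL-Real_Asymp.Real_Asymp"
begin


lemma lim_tL1: "((\<lambda>t::real. t * ln t) \<longlongrightarrow> 0) (at_right 0)" by real_asymp
lemma lim_tL2: "((\<lambda>t::real. t * ln t ^ 2) \<longlongrightarrow> 0) (at_right 0)" by real_asymp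
lemma lim_tL3: "((\<lambda>t::real. t * ln t ^ 3) \<longlongrightarrow> 0) (at_right 0)" by real_asymp
lemma lim_t2L1: "((\<lambda>t::real. t^2 * ln t) \<longlongrightarrow> 0) (at_right 0)" by real_asymp
lemma lim_t2L2: "((\<lambda>t::real. t^2 * ln t ^ 2) \<longlongrightarrow> 0) (at_right 0)" by real_asymp
lemma lim_t2L3: "((\<lambda>t::real. t^2 * ln t ^ 3) \<longlongrightarrow> 0) (at_right 0)" by real_asymp
lemma lim_t2L4: "((\<lambda>t::real. t^2 * ln t ^ 4) \<longlongrightarrow> 0) (at_right 0)" by real_asymp
lemma lim_t: "((\<lambda>t::real. t) \<longlongrightarrow> 0) (at_right 0)" by real_asymp
lemma lim_t2: "((\<lambda>t::real. t^2) \<longlongrightarrow> 0) (at_right 0)" by real_asymp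
lemma lim_iL: "((\<lambda>t::real. 1 / ln t) \<longlongrightarrow> 0) (at_right 0)" by real_asymp
lemma lim_iL2: "((\<lambda>t::real. 1 / ln t ^ 2) \<longlongrightarrow> 0) (at_right 0)" by real_asymp
lemma lim_tiL: "((\<lambda>t::real. t / ln t) \<longlongrightarrow> 0) (at_right 0)" by real_asymp
lemma lim_tL: "((\<lambda>t::real. t * ln t) \<longlongrightarrow> 0) (at_right 0)" by real_asymp

lemma ev_pos: "eventually (\<lambda>t::real. 0 < t) (at_right 0)"
  by (rule eventually_at_right_less)

datatype jet = J real real real real real real

fun jv :: "jet \<Rightarrow> real \<Rightarrow> real" where
  "jv (J c0 c1 c2 c3 c4 c5) t = c0 + c1 * (t * ln t) + c2 * t + c3 * (t * ln t)^2 + c4 * (t * (t * ln t)) + c5 * t^2"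

fun jadd :: "jet \<Rightarrow> jet \<Rightarrow> jet" where
  "jadd (J a0 a1 a2 a3 a4 a5) (J b0 b1 b2 b3 b4 b5) = J (a0+b0) (a1+b1) (a2+b2) (a3+b3) (a4+b4) (a5+b5)"
fun jsub :: "jet \<Rightarrow> jet \<Rightarrow> jet" where
  "jsub (J a0 a1 a2 a3 a4 a5) (J b0 b1 b2 b3 b4 b5) = J (a0-b0) (a1-b1) (a2-b2) (a3-b3) (a4-b4) (a5-b5)"
fun jscale :: "real \<Rightarrow> jet \<Rightarrow> jet" where
  "jscale k (J a0 a1 a2 a3 a4 a5) = J (k*a0) (k*a1) (k*a2) (k*a3) (k*a4) (k*a5)"
fun jmul :: "jet \<Rightarrow> jet \<Rightarrow> jet" where
  "jmul (J a0 a1 a2 a3 a4 a5) (J b0 b1 b2 b3 b4 b5) =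
    J (a0*b0) (a0*b1+a1*b0) (a0*b2+a2*b0) (a0*b3+a1*b1+a3*b0) (a0*b4+a1*b2+a2*b1+a4*b0) (a0*b5+a2*b2+a5*b0)"

fun j0 :: "jet \<Rightarrow> real" where "j0 (J a0 a1 a2 a3 a4 a5) = a0"

definition hasjet :: "(real \<Rightarrow> real) \<Rightarrow> jet \<Rightarrow> bool" where
  "hasjet f c \<longleftrightarrow> ((\<lambda>t. (f t - jv c t) / t^2) \<longlongrightarrow> 0) (at_right 0)"

lemma jv_tendsto: "((\<lambda>t. jv c t) \<longlongrightarrow> j0 c) (at_right 0)"
proof (cases c)
  case (J a0 a1 a2 a3 a4 a5)
  have "((\<lambda>t. a0 + a1 * (t * ln t) + a2 * t + a3 * (t * ln t)^2 + a4 * (t * (t * ln t)) + a5 * t^2)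
     \<longlongrightarrow> a0 + a1 * 0 + a2 * 0 + a3 * 0^2 + a4 * (0 * 0) + a5 * 0^2) (at_right 0)"
    by (intro tendsto_intros lim_tL lim_t)
  then show ?thesis using J by simp
qed

lemma hasjet_tendsto:
  assumes "hasjet f c" shows "(f \<longlongrightarrow> j0 c) (at_right 0)"
proof -
  have "((\<lambda>t. (f t - jv c t) / t^2 * t^2 + jv c t) \<longlongrightarrow> 0 * 0 + j0 c) (at_right 0)"
    using assms unfolding hasjet_def by (intro tendsto_intros lim_t2 jv_tendsto)
  moreover have "eventually (\<lambda>t. (f t - jv c t) / t^2 * t^2 + jv c t = f t) (at_right (0::real))"
    using ev_pos by (rule eventually_mono) simp
  ultimately show ?thesis by (simp add: tendsto_cong)
qed

lemma hasjet_cong: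
  assumes "hasjet f c" "eventually (\<lambda>t. f t = g t) (at_right 0)" shows "hasjet g c"
  using assms unfolding hasjet_def
  by (elim tendsto_cong[THEN iffD1, rotated]) (auto elim: eventually_mono)

lemma hasjet_add: "hasjet f a \<Longrightarrow> hasjet g b \<Longrightarrow> hasjet (\<lambda>t. f t + g t) (jadd a b)"
  unfolding hasjet_def
  apply (cases a; cases b)
  apply (drule (1) tendsto_add)
  apply (simp add: add_divide_distrib[symmetric] algebra_simps)
  done

lemma hasjet_sub: "hasjet f a \<Longrightarrow> hasjet g b \<Longrightarrow> hasjet (\<lambda>t. f t - g t) (jsub a b)"
  unfolding hasjet_def
  apply (cases a; cases b)
  apply (drule (1) tendsto_diff)
  apply (simp add: diff_divide_distrib[symmetric] algebra_simps)
  done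

lemma hasjet_scale: "hasjet f a \<Longrightarrow> hasjet (\<lambda>t. k * f t) (jscale k a)"
  unfolding hasjet_def
  apply (cases a)
  apply (drule tendsto_mult_left[where c=k])
  apply (simp add: algebra_simps)
  done

lemma hasjet_mult:
  assumes f: "hasjet f a" and g: "hasjet g b"
  shows "hasjet (\<lambda>t. f t * g t) (jmul a b)"
proof -
  obtain a0 a1 a2 a3 a4 a5 where a: "a = J a0 a1 a2 a3 a4 a5" by (cases a)
  obtain b0 b1 b2 b3 b4 b5 where b: "b = J b0 b1 b2 b3 b4 b5" by (cases b)
  define r where "r t = (f t - jv a t) / t^2" for t
  define s where "s t = (g t - jv b t) / t^2" for t
  have r: "(r \<longlongrightarrow> 0) (at_right 0)" using f unfolding hasjet_def r_def .
  have s: "(s \<longlongrightarrow> 0) (at_right 0)" using g unfolding hasjet_def s_def .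
  define E where "E t = a1*b3 * (t * ln t ^ 3) + (a1*b4 + a2*b3) * (t * ln t ^ 2) + (a1*b5 + a2*b4) * (t * ln t) + a2*b5 * t
     + b1*a3 * (t * ln t ^ 3) + (b1*a4 + b2*a3) * (t * ln t ^ 2) + (b1*a5 + b2*a4) * (t * ln t) + b2*a5 * t
     + a3*b3 * (t^2 * ln t ^ 4) + (a3*b4+a4*b3) * (t^2 * ln t ^ 3) + (a3*b5 + a4*b4 + a5*b3) * (t^2 * ln t ^ 2)
     + (a4*b5+a5*b4) * (t^2 * ln t) + a5*b5 * t^2" for t
  have E: "(E \<longlongrightarrow> 0) (at_right 0)"
  proof -
    have "(E \<longlongrightarrow> a1*b3 * 0 + (a1*b4 + a2*b3) * 0 + (a1*b5 + a2*b4) * 0 + a2*b5 * 0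
     + b1*a3 * 0 + (b1*a4 + b2*a3) * 0 + (b1*a5 + b2*a4) * 0 + b2*a5 * 0
     + a3*b3 * 0 + (a3*b4+a4*b3) * 0 + (a3*b5 + a4*b4 + a5*b3) * 0
     + (a4*b5+a5*b4) * 0 + a5*b5 * 0) (at_right 0)"
      unfolding E_def by (intro tendsto_intros lim_tL1 lim_tL2 lim_tL3 lim_t2L1 lim_t2L2 lim_t2L3 lim_t2L4 lim_t lim_t2)
    then show ?thesis by simp
  qed
  have lim: "((\<lambda>t. E t + jv a t * s t + r t * jv b t + t^2 * (r t * s t)) \<longlongrightarrow> 0 + j0 a * 0 + 0 * j0 b + 0 * (0 * 0)) (at_right 0)"
    by (intro tendsto_intros E r s jv_tendsto lim_t2)
  have ev: "eventually (\<lambda>t. E t + jv a t * s t + r t * jv b t + t^2 * (r t * s t) = (f t * g t - jv (jmul a b) t) / t^2) (at_right 0)"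
    using ev_pos
  proof (rule eventually_mono)
    fix t :: real assume t: "0 < t"
    have fe: "f t = jv a t + t^2 * r t" and ge: "g t = jv b t + t^2 * s t" using t by (simp_all add: r_def s_def)
    show "E t + jv a t * s t + r t * jv b t + t^2 * (r t * s t) = (f t * g t - jv (jmul a b) t) / t^2"
      unfolding fe ge using t by (simp add: a b E_def field_simps power2_eq_square power3_eq_cube power4_eq_xxxx)
  qed
  show ?thesis unfolding hasjet_def using lim ev by (simp add: tendsto_cong)
qed

lemma ev_pos1: "eventually (\<lambda>t::real. 0 < t \<and> t < 1) (at_right 0)"
proof -
  have "eventually (\<lambda>t::real. t < 1) (at_right 0)"
    by (rule eventually_at_right_to_0[THEN iffD2]) (simp add: eventually_at_right_less, real_asymp)
  with ev_pos show ?thesis by (rule eventually_conj)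
qed

lemma jet_unique:
  assumes g: "((\<lambda>t. jv (J c0 c1 c2 c3 c4 c5) t / t^2) \<longlongrightarrow> 0) (at_right 0)"
  shows "c0 = 0 \<and> c1 = 0 \<and> c2 = 0 \<and> c3 = 0 \<and> c4 = 0 \<and> c5 = 0"
proof -
  let ?g = "\<lambda>t. jv (J c0 c1 c2 c3 c4 c5) t / t^2"
  have nt: "at_right (0::real) \<noteq> bot" by simp
  have "((\<lambda>t. ?g t * t^2) \<longlongrightarrow> 0 * 0) (at_right 0)" by (intro tendsto_intros g lim_t2)
  moreover have "eventually (\<lambda>t. ?g t * t^2 = jv (J c0 c1 c2 c3 c4 c5) t) (at_right 0)"
    using ev_pos by (rule eventually_mono) simp
  ultimately have "((\<lambda>t. jv (J c0 c1 c2 c3 c4 c5) t) \<longlongrightarrow> 0) (at_right 0)" by (simp add: tendsto_cong)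
  with jv_tendsto[of "J c0 c1 c2 c3 c4 c5"] have z0: "c0 = 0" using tendsto_unique[OF nt] by force
  have "((\<lambda>t. ?g t * (t / ln t)) \<longlongrightarrow> 0 * 0) (at_right 0)" by (intro tendsto_intros g lim_tiL)
  moreover have "((\<lambda>t. c1 + c2 * (1 / ln t) + c3 * (t * ln t) + c4 * t + c5 * (t / ln t)) \<longlongrightarrow> c1 + c2 * 0 + c3 * 0 + c4 * 0 + c5 * 0) (at_right 0)"
    by (intro tendsto_intros lim_iL lim_tL lim_t lim_tiL)
  moreover have "eventually (\<lambda>t. ?g t * (t / ln t) = c1 + c2 * (1 / ln t) + c3 * (t * ln t) + c4 * t + c5 * (t / ln t)) (at_right 0)"
    using ev_pos1 by (rule eventually_mono) (auto simp: z0 field_simps power2_eq_square)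
  ultimately have z1: "c1 = 0" using tendsto_unique[OF nt] by (force simp: tendsto_cong)
  have "((\<lambda>t. ?g t * t) \<longlongrightarrow> 0 * 0) (at_right 0)" by (intro tendsto_intros g lim_t)
  moreover have "((\<lambda>t. c2 + c3 * (t * ln t ^ 2) + c4 * (t * ln t) + c5 * t) \<longlongrightarrow> c2 + c3 * 0 + c4 * 0 + c5 * 0) (at_right 0)"
    by (intro tendsto_intros lim_tL2 lim_tL lim_t)
  moreover have "eventually (\<lambda>t. ?g t * t = c2 + c3 * (t * ln t ^ 2) + c4 * (t * ln t) + c5 * t) (at_right 0)"
    using ev_pos1 by (rule eventually_mono) (auto simp: z0 z1 field_simps power2_eq_square)
  ultimately have z2: "c2 = 0" using tendsto_unique[OF nt] by (force simp: tendsto_cong)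
  have "((\<lambda>t. ?g t * (1 / ln t ^ 2)) \<longlongrightarrow> 0 * 0) (at_right 0)" by (intro tendsto_intros g lim_iL2)
  moreover have "((\<lambda>t. c3 + c4 * (1 / ln t) + c5 * (1 / ln t ^ 2)) \<longlongrightarrow> c3 + c4 * 0 + c5 * 0) (at_right 0)"
    by (intro tendsto_intros lim_iL lim_iL2)
  moreover have "eventually (\<lambda>t. ?g t * (1 / ln t ^ 2) = c3 + c4 * (1 / ln t) + c5 * (1 / ln t ^ 2)) (at_right 0)"
    using ev_pos1 by (rule eventually_mono) (auto simp: z0 z1 z2 field_simps power2_eq_square)
  ultimately have z3: "c3 = 0" using tendsto_unique[OF nt] by (force simp: tendsto_cong)
  have "((\<lambda>t. ?g t * (1 / ln t)) \<longlongrightarrow> 0 * 0) (at_right 0)" by (intro tendsto_intros g lim_iL)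
  moreover have "((\<lambda>t. c4 + c5 * (1 / ln t)) \<longlongrightarrow> c4 + c5 * 0) (at_right 0)"
    by (intro tendsto_intros lim_iL)
  moreover have "eventually (\<lambda>t. ?g t * (1 / ln t) = c4 + c5 * (1 / ln t)) (at_right 0)"
    using ev_pos1 by (rule eventually_mono) (auto simp: z0 z1 z2 z3 field_simps power2_eq_square)
  ultimately have z4: "c4 = 0" using tendsto_unique[OF nt] by (force simp: tendsto_cong)
  have "eventually (\<lambda>t. ?g t = c5) (at_right 0)"
    using ev_pos1 by (rule eventually_mono) (auto simp: z0 z1 z2 z3 z4 field_simps power2_eq_square)
  then have "((\<lambda>t. c5) \<longlongrightarrow> 0) (at_right (0::real))" using Lim_transform_eventually[OF g, of "\<lambda>t. c5"] by simp
  then have z5: "c5 = 0" using tendsto_unique[OF nt] tendsto_const by blast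
  show ?thesis using z0 z1 z2 z3 z4 z5 by simp
qed


lemma hasjet_const: "hasjet (\<lambda>t. k) (J k 0 0 0 0 0)"
  unfolding hasjet_def by simp

lemma hasjet_t: "hasjet (\<lambda>t. t) (J 0 0 1 0 0 0)"
  unfolding hasjet_def by simp

lemma hasjet_eqI: "hasjet f a \<Longrightarrow> a = b \<Longrightarrow> hasjet f b" by simp

definition "U1f p1 a1 b1 d1 t = p1 + a1*t + b1*t^2 + d1*(t^3*ln t)"
definition "U2f a0 b0 d0 t = a0 + 2*b0*t + d0*(3*t^2*ln t + t^2)"
definition "U22f b0 d0 t = 2*b0 + d0*(6*t*ln t + 5*t)"

definition Qf :: "real \<Rightarrow> real \<Rightarrow> real \<Rightarrow> real \<Rightarrow> real \<Rightarrow> real \<Rightarrow> real \<Rightarrow> real \<Rightarrow> real \<Rightarrow> real \<Rightarrow> real \<Rightarrow> real \<Rightarrow> real \<Rightarrow> real" where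
  "Qf H p1 p2 a0 a1 a2 b0 b1 b2 d0 d1 d2 t =
     (let u1 = U1f p1 a1 b1 d1 t; u2 = U2f a0 b0 d0 t;
          u11 = U1f p2 a2 b2 d2 t; u12 = U2f a1 b1 d1 t;
          u21 = U2f a1 b1 d1 t; u22 = U22f b0 d0 t;
          W2 = 1 + u1\<^sup>2 + u2\<^sup>2
      in (u11 + u22) - (u1 * u1 * u11 + u1 * u2 * u12 + u2 * u1 * u21 + u2 * u2 * u22) / W2
         - 2 / t * (u2 - H * sqrt W2))"

lemma lim_t3L: "((\<lambda>t::real. t * ln t) \<longlongrightarrow> 0) (at_right 0)" by real_asymp

lemma hasjet_U1: "hasjet (U1f p1 a1 b1 d1) (J p1 0 a1 0 0 b1)"
proof -
  have "((\<lambda>t. d1 * (t * ln t)) \<longlongrightarrow> d1 * 0) (at_right 0)" by (intro tendsto_intros lim_tL)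
  moreover have "eventually (\<lambda>t. d1 * (t * ln t) = (U1f p1 a1 b1 d1 t - jv (J p1 0 a1 0 0 b1) t) / t^2) (at_right 0)"
    using ev_pos by (rule eventually_mono) (simp add: U1f_def field_simps power2_eq_square power3_eq_cube)
  ultimately show ?thesis unfolding hasjet_def by (simp add: tendsto_cong)
qed

lemma hasjet_U2: "hasjet (U2f a0 b0 d0) (J a0 0 (2*b0) 0 (3*d0) d0)"
  unfolding hasjet_def
  by (rule tendsto_eventually, rule eventually_mono[OF ev_pos]) (simp add: U2f_def field_simps power2_eq_square)

lemma hasjet_U22: "hasjet (U22f b0 d0) (J (2*b0) (6*d0) (5*d0) 0 0 0)"
  unfolding hasjet_def
  by (rule tendsto_eventually, rule eventually_mono[OF ev_pos]) (simp add: U22f_def field_simps power2_eq_square)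

lemma tendsto_transfer: "(f \<longlongrightarrow> a) F \<Longrightarrow> eventually (\<lambda>x. f x = g x) F \<Longrightarrow> a = b \<Longrightarrow> (g \<longlongrightarrow> b) F"
  by (simp add: tendsto_cong)

lemma prodP: "(H * s * w - m) / t^2 * (H * s * w + m) = (H^2 * ((s * s) * w * w) - m * m) / (t::real)^2"
  by (simp add: algebra_simps power2_eq_square)

lemma jet_unique_f:
  assumes "hasjet f (J c0 c1 c2 c3 c4 c5)" "((\<lambda>t. f t / t^2) \<longlongrightarrow> 0) (at_right 0)"
  shows "c0 = 0 \<and> c1 = 0 \<and> c2 = 0 \<and> c3 = 0 \<and> c4 = 0 \<and> c5 = 0"
proof (rule jet_unique)
  have "((\<lambda>t. f t / t^2 - (f t - jv (J c0 c1 c2 c3 c4 c5) t) / t^2) \<longlongrightarrow> 0 - 0) (at_right 0)"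
    using assms unfolding hasjet_def by (intro tendsto_intros)
  then show "((\<lambda>t. jv (J c0 c1 c2 c3 c4 c5) t / t^2) \<longlongrightarrow> 0) (at_right 0)"
    by (simp add: diff_divide_distrib)
qed

lemma asym:
  fixes H p1 p2 a0 a1 a2 b0 b1 b2 d0 d1 d2 :: real
  assumes lim: "((\<lambda>t. Qf H p1 p2 a0 a1 a2 b0 b1 b2 d0 d1 d2 t / t) \<longlongrightarrow> 0) (at_right 0)"
  shows "a0 = H * sqrt (1 + p1^2 + a0^2)"
    and "(- 2*a0*b0 - 14*a0*a0*a0*b0 - 12*a0*a0*a0*a0*a0*b0 + p2*a0 + 2*p2*a0*a0*a0 + p2*a0*a0*a0*a0*a0 - 6*p1*a0*a0*a1 - 6*p1*a0*a0*a0*a0*a1 - 4*p1*p1*a0*b0 - 14*p1*p1*a0*a0*a0*b0 + p1*p1*p2*a0 + p1*p1*p2*a0*a0*a0 - 6*p1*p1*p1*a0*a0*a1 - 2*p1*p1*p1*p1*a0*b0 + 12*H*H*a0*b0 + 24*H*H*a0*a0*a0*b0 + 12*H*H*a0*a0*a0*a0*a0*b0 + 6*H*H*p1*a1 + 12*H*H*p1*a0*a0*a1 + 6*H*H*p1*a0*a0*a0*a0*a1 + 24*H*H*p1*p1*a0*b0 + 24*H*H*p1*p1*a0*a0*a0*b0 + 12*H*H*p1*p1*p1*a1 + 12*H*H*p1*p1*p1*a0*a0*a1 + 12*H*H*p1*p1*p1*p1*a0*b0 + 6*H*H*p1*p1*p1*p1*p1*a1) = 0" and "(- b0*b0 + 3*a0*d0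 + a0*a2 - 36*a0*a0*b0*b0 - 4*a0*a0*a1*a1 - 3*a0*a0*a0*d0 + 2*a0*a0*a0*a2 - 60*a0*a0*a0*a0*b0*b0 - 4*a0*a0*a0*a0*a1*a1 - 6*a0*a0*a0*a0*a0*d0 + a0*a0*a0*a0*a0*a2 + p2*b0 + 11*p2*a0*a0*b0 + 10*p2*a0*a0*a0*a0*b0 - (1/4)*p2*p2 - (1/2)*p2*p2*a0*a0 - (1/4)*p2*p2*a0*a0*a0*a0 - 14*p1*a0*a1*b0 - 8*p1*a0*a0*b1 - 44*p1*a0*a0*a0*a1*b0 - 8*p1*a0*a0*a0*a0*b1 + 3*p1*p2*a0*a1 + 3*p1*p2*a0*a0*a0*a1 - 2*p1*p1*b0*b0 + 6*p1*p1*a0*d0 + p1*p1*a0*a2 - 36*p1*p1*a0*a0*b0*b0 - 13*p1*p1*a0*a0*a1*a1 - 3*p1*p1*a0*a0*a0*d0 + p1*p1*a0*a0*a0*a2 + p1*p1*p2*b0 + 5*p1*p1*p2*a0*a0*b0 - 14*p1*p1*p1*a0*a1*b0 - 8*p1*p1*p1*a0*a0*b1 - p1*p1*p1*p1*b0*b0 + 3*p1*p1*p1*p1*a0*d0 + 12*H*H*b0*b0 + 3*H*H*a1*a1 + 6*H*H*a0*d0 + 72*H*H*a0*a0*b0*b0 + 6*H*H*a0*a0*a1*a1 + 12*H*H*a0*a0*a0*d0 + 60*H*H*a0*a0*a0*a0*b0*b0 + 3*H*H*a0*a0*a0*a0*a1*a1 + 6*H*H*a0*a0*a0*a0*a0*d0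 + 6*H*H*p1*b1 + 48*H*H*p1*a0*a1*b0 + 12*H*H*p1*a0*a0*b1 + 48*H*H*p1*a0*a0*a0*a1*b0 + 6*H*H*p1*a0*a0*a0*a0*b1 + 24*H*H*p1*p1*b0*b0 + 18*H*H*p1*p1*a1*a1 + 12*H*H*p1*p1*a0*d0 + 72*H*H*p1*p1*a0*a0*b0*b0 + 18*H*H*p1*p1*a0*a0*a1*a1 + 12*H*H*p1*p1*a0*a0*a0*d0 + 12*H*H*p1*p1*p1*b1 + 48*H*H*p1*p1*p1*a0*a1*b0 + 12*H*H*p1*p1*p1*a0*a0*b1 + 12*H*H*p1*p1*p1*p1*b0*b0 + 15*H*H*p1*p1*p1*p1*a1*a1 + 6*H*H*p1*p1*p1*p1*a0*d0 + 6*H*H*p1*p1*p1*p1*p1*b1) = 0" and "H = 0 \<Longrightarrow> (- (3/2)*d0 - (1/2)*a2 + 12*a0*b0*b0 + 2*a0*a1*a1 + 3*a0*a0*d0 - (1/2)*a0*a0*a2 - 2*p2*a0*b0 + 4*p1*a1*b0 + 4*p1*a0*b1 - (3/2)*p1*p1*d0) = 0"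
proof -
  define U1 where "U1 = U1f p1 a1 b1 d1"
  define U2 where "U2 = U2f a0 b0 d0"
  define U11 where "U11 = U1f p2 a2 b2 d2"
  define U12 where "U12 = U2f a1 b1 d1"
  define U22 where "U22 = U22f b0 d0"
  define W where "W t = 1 + U1 t * U1 t + U2 t * U2 t" for t
  define Num where "Num t = U1 t * U1 t * U11 t + U1 t * U2 t * U12 t + U2 t * U1 t * U12 t + U2 t * U2 t * U22 t" for t
  define N where "N t = (U11 t + U22 t) * W t - Num t" for t
  define M where "M t = U2 t * W t - (1/2) * (t * N t)" for t
  define P where "P t = H^2 * (W t * W t * W t) - M t * M t" for t
  define Q where "Q t = Qf H p1 p2 a0 a1 a2 b0 b1 b2 d0 d1 d2 t" for t
  have jU1: "hasjet U1 (J (p1) 0 (a1) 0 0 (b1))" unfolding U1_def by (rule hasjet_U1)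
  have jU2: "hasjet U2 (J (a0) 0 (2*b0) 0 (3*d0) (d0))" unfolding U2_def by (rule hasjet_U2)
  have jU11: "hasjet U11 (J (p2) 0 (a2) 0 0 (b2))" unfolding U11_def by (rule hasjet_U1)
  have jU12: "hasjet U12 (J (a1) 0 (2*b1) 0 (3*d1) (d1))" unfolding U12_def by (rule hasjet_U2)
  have jU22: "hasjet U22 (J (2*b0) (6*d0) (5*d0) 0 0 0)" unfolding U22_def by (rule hasjet_U22)
  have jW: "hasjet W (J (1 + a0*a0 + p1*p1) 0 (4*a0*b0 + 2*p1*a1) 0 (6*a0*d0) (4*b0*b0 + a1*a1 + 2*a0*d0 + 2*p1*b1))" unfolding W_def
    by (rule hasjet_eqI[OF hasjet_add[OF hasjet_add[OF hasjet_const hasjet_mult[OF jU1 jU1]] hasjet_mult[OF jU2 jU2]]]) (simp add: algebra_simps power2_eq_square)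
  have jNum: "hasjet Num (J (2*a0*a0*b0 + 2*p1*a0*a1 + p1*p1*p2) (6*a0*a0*d0) (8*a0*b0*b0 + 2*a0*a1*a1 + 5*a0*a0*d0 + 4*p1*a1*b0 + 4*p1*a0*b1 + 2*p1*p2*a1 + p1*p1*a2) 0 (36*a0*b0*d0 + 6*p1*a1*d0 + 6*p1*a0*d1) (8*b0*b0*b0 + 4*a1*a1*b0 + 24*a0*b0*d0 + 6*a0*a1*b1 + p2*a1*a1 + 8*p1*b0*b1 + 2*p1*a1*d0 + 2*p1*a1*a2 + 2*p1*a0*d1 + 2*p1*p2*b1 + p1*p1*b2))" unfolding Num_def
    by (rule hasjet_eqI[OF hasjet_add[OF hasjet_add[OF hasjet_add[OF hasjet_mult[OF hasjet_mult[OF jU1 jU1] jU11] hasjet_mult[OF hasjet_mult[OF jU1 jU2] jU12]] hasjet_mult[OF hasjet_mult[OF jU2 jU1] jU12]] hasjet_mult[OF hasjet_mult[OF jU2 jU2] jU22]]]) (simp add: algebra_simps power2_eq_square)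
  have jN: "hasjet N (J (2*b0 + p2 + p2*a0*a0 - 2*p1*a0*a1 + 2*p1*p1*b0) (6*d0 + 6*p1*p1*d0) (5*d0 + a2 - 2*a0*a1*a1 + a0*a0*a2 + 4*p2*a0*b0 - 4*p1*a0*b1 + 5*p1*p1*d0) 0 (6*p2*a0*d0 + 6*p1*a1*d0 - 6*p1*a0*d1) (b2 - 2*a1*a1*b0 + 4*a0*a2*b0 - 6*a0*a1*b1 + a0*a0*b2 + 4*p2*b0*b0 + 2*p2*a0*d0 - 4*p1*b0*b1 + 8*p1*a1*d0 - 2*p1*a0*d1))" unfolding N_def
    by (rule hasjet_eqI[OF hasjet_sub[OF hasjet_mult[OF hasjet_add[OF jU11 jU22] jW] jNum]]) (simp add: algebra_simps power2_eq_square)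
  have jM: "hasjet M (J (a0 + a0*a0*a0 + p1*p1*a0) 0 (b0 + 6*a0*a0*b0 - (1/2)*p2 - (1/2)*p2*a0*a0 + 3*p1*a0*a1 + p1*p1*b0) 0 (9*a0*a0*d0) (- (3/2)*d0 - (1/2)*a2 + 12*a0*b0*b0 + 2*a0*a1*a1 + 3*a0*a0*d0 - (1/2)*a0*a0*a2 - 2*p2*a0*b0 + 4*p1*a1*b0 + 4*p1*a0*b1 - (3/2)*p1*p1*d0))" unfolding M_def
    by (rule hasjet_eqI[OF hasjet_sub[OF hasjet_mult[OF jU2 jW] hasjet_scale[OF hasjet_mult[OF hasjet_t jN]]]]) (simp add: algebra_simps power2_eq_square)
  have jW2: "hasjet (\<lambda>t. W t * W t) (J (1 + 2*a0*a0 + a0*a0*a0*a0 + 2*p1*p1 + 2*p1*p1*a0*a0 + p1*p1*p1*p1) 0 (8*a0*b0 + 8*a0*a0*a0*b0 + 4*p1*a1 + 4*p1*a0*a0*a1 + 8*p1*p1*a0*b0 + 4*p1*p1*p1*a1) 0 (12*a0*d0 + 12*a0*a0*a0*d0 + 12*p1*p1*a0*d0) (8*b0*b0 + 2*a1*a1 + 4*a0*d0 + 24*a0*a0*b0*b0 + 2*a0*a0*a1*a1 + 4*a0*a0*a0*d0 + 4*p1*b1 + 16*p1*a0*a1*b0 + 4*p1*a0*a0*b1 + 8*p1*p1*b0*b0 + 6*p1*p1*a1*a1 + 4*p1*p1*a0*d0 + 4*p1*p1*p1*b1))"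
    by (rule hasjet_eqI[OF hasjet_mult[OF jW jW]]) (simp add: algebra_simps power2_eq_square)
  have jW3: "hasjet (\<lambda>t. W t * W t * W t) (J (1 + 3*a0*a0 + 3*a0*a0*a0*a0 + a0*a0*a0*a0*a0*a0 + 3*p1*p1 + 6*p1*p1*a0*a0 + 3*p1*p1*a0*a0*a0*a0 + 3*p1*p1*p1*p1 + 3*p1*p1*p1*p1*a0*a0 + p1*p1*p1*p1*p1*p1) 0 (12*a0*b0 + 24*a0*a0*a0*b0 + 12*a0*a0*a0*a0*a0*b0 + 6*p1*a1 + 12*p1*a0*a0*a1 + 6*p1*a0*a0*a0*a0*a1 + 24*p1*p1*a0*b0 + 24*p1*p1*a0*a0*a0*b0 + 12*p1*p1*p1*a1 + 12*p1*p1*p1*a0*a0*a1 + 12*p1*p1*p1*p1*a0*b0 + 6*p1*p1*p1*p1*p1*a1) 0 (18*a0*d0 + 36*a0*a0*a0*d0 + 18*a0*a0*a0*a0*a0*d0 + 36*p1*p1*a0*d0 + 36*p1*p1*a0*a0*a0*d0 + 18*p1*p1*p1*p1*a0*d0) (12*b0*b0 + 3*a1*a1 + 6*a0*d0 + 72*a0*a0*b0*b0 + 6*a0*a0*a1*a1 + 12*a0*a0*a0*d0 + 60*a0*a0*a0*a0*b0*b0 + 3*a0*a0*a0*a0*a1*a1 + 6*a0*a0*a0*a0*a0*d0 + 6*p1*b1 + 48*p1*a0*a1*b0 + 12*p1*a0*a0*b1 + 48*p1*a0*a0*a0*a1*b0 + 6*p1*a0*a0*a0*a0*b1 + 24*p1*p1*b0*b0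 + 18*p1*p1*a1*a1 + 12*p1*p1*a0*d0 + 72*p1*p1*a0*a0*b0*b0 + 18*p1*p1*a0*a0*a1*a1 + 12*p1*p1*a0*a0*a0*d0 + 12*p1*p1*p1*b1 + 48*p1*p1*p1*a0*a1*b0 + 12*p1*p1*p1*a0*a0*b1 + 12*p1*p1*p1*p1*b0*b0 + 15*p1*p1*p1*p1*a1*a1 + 6*p1*p1*p1*p1*a0*d0 + 6*p1*p1*p1*p1*p1*b1))"
    by (rule hasjet_eqI[OF hasjet_mult[OF jW2 jW]]) (simp add: algebra_simps power2_eq_square)
  have jM2: "hasjet (\<lambda>t. M t * M t) (J (a0*a0 + 2*a0*a0*a0*a0 + a0*a0*a0*a0*a0*a0 + 2*p1*p1*a0*a0 + 2*p1*p1*a0*a0*a0*a0 + p1*p1*p1*p1*a0*a0) 0 (2*a0*b0 + 14*a0*a0*a0*b0 + 12*a0*a0*a0*a0*a0*b0 - p2*a0 - 2*p2*a0*a0*a0 - p2*a0*a0*a0*a0*a0 + 6*p1*a0*a0*a1 + 6*p1*a0*a0*a0*a0*a1 + 4*p1*p1*a0*b0 + 14*p1*p1*a0*a0*a0*b0 - p1*p1*p2*a0 - p1*p1*p2*a0*a0*a0 + 6*p1*p1*p1*a0*a0*a1 + 2*p1*p1*p1*p1*a0*b0) 0 (18*a0*a0*a0*d0 + 18*a0*a0*a0*a0*a0*d0 + 18*p1*p1*a0*a0*a0*d0) (b0*b0 - 3*a0*d0 - a0*a2 + 36*a0*a0*b0*b0 + 4*a0*a0*a1*a1 + 3*a0*a0*a0*d0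 - 2*a0*a0*a0*a2 + 60*a0*a0*a0*a0*b0*b0 + 4*a0*a0*a0*a0*a1*a1 + 6*a0*a0*a0*a0*a0*d0 - a0*a0*a0*a0*a0*a2 - p2*b0 - 11*p2*a0*a0*b0 - 10*p2*a0*a0*a0*a0*b0 + (1/4)*p2*p2 + (1/2)*p2*p2*a0*a0 + (1/4)*p2*p2*a0*a0*a0*a0 + 14*p1*a0*a1*b0 + 8*p1*a0*a0*b1 + 44*p1*a0*a0*a0*a1*b0 + 8*p1*a0*a0*a0*a0*b1 - 3*p1*p2*a0*a1 - 3*p1*p2*a0*a0*a0*a1 + 2*p1*p1*b0*b0 - 6*p1*p1*a0*d0 - p1*p1*a0*a2 + 36*p1*p1*a0*a0*b0*b0 + 13*p1*p1*a0*a0*a1*a1 + 3*p1*p1*a0*a0*a0*d0 - p1*p1*a0*a0*a0*a2 - p1*p1*p2*b0 - 5*p1*p1*p2*a0*a0*b0 + 14*p1*p1*p1*a0*a1*b0 + 8*p1*p1*p1*a0*a0*b1 + p1*p1*p1*p1*b0*b0 - 3*p1*p1*p1*p1*a0*d0))"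
    by (rule hasjet_eqI[OF hasjet_mult[OF jM jM]]) (simp add: algebra_simps power2_eq_square)
  have jP: "hasjet P (J (- a0*a0 - 2*a0*a0*a0*a0 - a0*a0*a0*a0*a0*a0 - 2*p1*p1*a0*a0 - 2*p1*p1*a0*a0*a0*a0 - p1*p1*p1*p1*a0*a0 + H*H + 3*H*H*a0*a0 + 3*H*H*a0*a0*a0*a0 + H*H*a0*a0*a0*a0*a0*a0 + 3*H*H*p1*p1 + 6*H*H*p1*p1*a0*a0 + 3*H*H*p1*p1*a0*a0*a0*a0 + 3*H*H*p1*p1*p1*p1 + 3*H*H*p1*p1*p1*p1*a0*a0 + H*H*p1*p1*p1*p1*p1*p1) 0 (- 2*a0*b0 - 14*a0*a0*a0*b0 - 12*a0*a0*a0*a0*a0*b0 + p2*a0 + 2*p2*a0*a0*a0 + p2*a0*a0*a0*a0*a0 - 6*p1*a0*a0*a1 - 6*p1*a0*a0*a0*a0*a1 - 4*p1*p1*a0*b0 - 14*p1*p1*a0*a0*a0*b0 + p1*p1*p2*a0 + p1*p1*p2*a0*a0*a0 - 6*p1*p1*p1*a0*a0*a1 - 2*p1*p1*p1*p1*a0*b0 + 12*H*H*a0*b0 + 24*H*H*a0*a0*a0*b0 + 12*H*H*a0*a0*a0*a0*a0*b0 + 6*H*H*p1*a1 + 12*H*H*p1*a0*a0*a1 + 6*H*H*p1*a0*a0*a0*a0*a1 + 24*H*H*p1*p1*a0*b0 + 24*H*H*p1*p1*a0*a0*a0*b0 + 12*H*H*p1*p1*p1*a1 + 12*H*H*p1*p1*p1*a0*a0*a1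 + 12*H*H*p1*p1*p1*p1*a0*b0 + 6*H*H*p1*p1*p1*p1*p1*a1) 0 (- 18*a0*a0*a0*d0 - 18*a0*a0*a0*a0*a0*d0 - 18*p1*p1*a0*a0*a0*d0 + 18*H*H*a0*d0 + 36*H*H*a0*a0*a0*d0 + 18*H*H*a0*a0*a0*a0*a0*d0 + 36*H*H*p1*p1*a0*d0 + 36*H*H*p1*p1*a0*a0*a0*d0 + 18*H*H*p1*p1*p1*p1*a0*d0) (- b0*b0 + 3*a0*d0 + a0*a2 - 36*a0*a0*b0*b0 - 4*a0*a0*a1*a1 - 3*a0*a0*a0*d0 + 2*a0*a0*a0*a2 - 60*a0*a0*a0*a0*b0*b0 - 4*a0*a0*a0*a0*a1*a1 - 6*a0*a0*a0*a0*a0*d0 + a0*a0*a0*a0*a0*a2 + p2*b0 + 11*p2*a0*a0*b0 + 10*p2*a0*a0*a0*a0*b0 - (1/4)*p2*p2 - (1/2)*p2*p2*a0*a0 - (1/4)*p2*p2*a0*a0*a0*a0 - 14*p1*a0*a1*b0 - 8*p1*a0*a0*b1 - 44*p1*a0*a0*a0*a1*b0 - 8*p1*a0*a0*a0*a0*b1 + 3*p1*p2*a0*a1 + 3*p1*p2*a0*a0*a0*a1 - 2*p1*p1*b0*b0 + 6*p1*p1*a0*d0 + p1*p1*a0*a2 - 36*p1*p1*a0*a0*b0*b0 - 13*p1*p1*a0*a0*a1*a1 - 3*p1*p1*a0*a0*a0*d0 + p1*p1*a0*a0*a0*a2 + p1*p1*p2*b0 + 5*p1*p1*p2*a0*a0*b0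 - 14*p1*p1*p1*a0*a1*b0 - 8*p1*p1*p1*a0*a0*b1 - p1*p1*p1*p1*b0*b0 + 3*p1*p1*p1*p1*a0*d0 + 12*H*H*b0*b0 + 3*H*H*a1*a1 + 6*H*H*a0*d0 + 72*H*H*a0*a0*b0*b0 + 6*H*H*a0*a0*a1*a1 + 12*H*H*a0*a0*a0*d0 + 60*H*H*a0*a0*a0*a0*b0*b0 + 3*H*H*a0*a0*a0*a0*a1*a1 + 6*H*H*a0*a0*a0*a0*a0*d0 + 6*H*H*p1*b1 + 48*H*H*p1*a0*a1*b0 + 12*H*H*p1*a0*a0*b1 + 48*H*H*p1*a0*a0*a0*a1*b0 + 6*H*H*p1*a0*a0*a0*a0*b1 + 24*H*H*p1*p1*b0*b0 + 18*H*H*p1*p1*a1*a1 + 12*H*H*p1*p1*a0*d0 + 72*H*H*p1*p1*a0*a0*b0*b0 + 18*H*H*p1*p1*a0*a0*a1*a1 + 12*H*H*p1*p1*a0*a0*a0*d0 + 12*H*H*p1*p1*p1*b1 + 48*H*H*p1*p1*p1*a0*a1*b0 + 12*H*H*p1*p1*p1*a0*a0*b1 + 12*H*H*p1*p1*p1*p1*b0*b0 + 15*H*H*p1*p1*p1*p1*a1*a1 + 6*H*H*p1*p1*p1*p1*a0*d0 + 6*H*H*p1*p1*p1*p1*p1*b1))" unfolding P_def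
    by (rule hasjet_eqI[OF hasjet_sub[OF hasjet_scale[OF jW3] jM2]]) (simp add: algebra_simps power2_eq_square)

  have Wpos: "W t > 0" for t unfolding W_def by (intro add_pos_nonneg) simp_all
  have Qeq: "Q t = (U11 t + U22 t) - Num t / W t - 2 / t * (U2 t - H * sqrt (W t))" for t
    by (simp add: Q_def Qf_def Let_def U1_def U2_def U11_def U12_def U22_def W_def Num_def power2_eq_square)
  have key: "t * Q t = 2 * H * sqrt (W t) - 2 * M t / W t" if t: "t > 0" for t
  proof -
    have "W t \<noteq> 0" using Wpos[of t] by simp
    then show ?thesis unfolding Qeq M_def N_def using t by (simp add: field_simps)
  qed
  have tQ: "((\<lambda>t. t * Q t) \<longlongrightarrow> 0) (at_right 0)"
  proof -
    have "((\<lambda>t. Q t / t * t^2) \<longlongrightarrow> 0 * 0) (at_right 0)"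
      using lim unfolding Q_def by (intro tendsto_intros lim_t2)
    moreover have "eventually (\<lambda>t. Q t / t * t^2 = t * Q t) (at_right 0)"
      using ev_pos by (rule eventually_mono) (simp add: power2_eq_square)
    ultimately show ?thesis by (rule tendsto_transfer) simp
  qed
  define W0 where "W0 = j0 (J (1 + a0*a0 + p1*p1) 0 (4*a0*b0 + 2*p1*a1) 0 (6*a0*d0) (4*b0*b0 + a1*a1 + 2*a0*d0 + 2*p1*b1))"
  define M0 where "M0 = j0 (J (a0 + a0*a0*a0 + p1*p1*a0) 0 (b0 + 6*a0*a0*b0 - (1/2)*p2 - (1/2)*p2*a0*a0 + 3*p1*a0*a1 + p1*p1*b0) 0 (9*a0*a0*d0) (- (3/2)*d0 - (1/2)*a2 + 12*a0*b0*b0 + 2*a0*a1*a1 + 3*a0*a0*d0 - (1/2)*a0*a0*a2 - 2*p2*a0*b0 + 4*p1*a1*b0 + 4*p1*a0*b1 - (3/2)*p1*p1*d0))"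
  have W0: "W0 = 1 + a0^2 + p1^2" unfolding W0_def by (simp add: power2_eq_square)
  have M0: "M0 = a0 * W0" unfolding M0_def W0 by (simp add: algebra_simps power2_eq_square)
  have W0pos: "W0 > 0" unfolding W0 by (intro add_pos_nonneg) simp_all
  have lW: "(W \<longlongrightarrow> W0) (at_right 0)" unfolding W0_def by (rule hasjet_tendsto[OF jW])
  have lM: "(M \<longlongrightarrow> M0) (at_right 0)" unfolding M0_def by (rule hasjet_tendsto[OF jM])
  have l2: "((\<lambda>t. 2 * H * sqrt (W t) - 2 * M t / W t) \<longlongrightarrow> 2 * H * sqrt W0 - 2 * M0 / W0) (at_right 0)"
    using W0pos by (intro tendsto_intros lW lM) simp
  have "((\<lambda>t. 2 * H * sqrt (W t) - 2 * M t / W t) \<longlongrightarrow> 0) (at_right 0)"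
    using tQ by (rule Lim_transform_eventually) (rule eventually_mono[OF ev_pos], simp add: key)
  with l2 have "2 * H * sqrt W0 - 2 * M0 / W0 = 0" using tendsto_unique[of "at_right (0::real)"] by force
  moreover have "M0 / W0 = a0" using W0pos by (simp add: M0)
  ultimately have "a0 = H * sqrt W0" by simp
  then show A: "a0 = H * sqrt (1 + p1^2 + a0^2)" by (simp add: W0 add_ac)
  have S: "sqrt (W t) * sqrt (W t) = W t" for t using Wpos[of t] by simp
  have hsm: "((\<lambda>t. (H * sqrt (W t) * W t - M t) / t^2) \<longlongrightarrow> 0) (at_right 0)"
  proof -
    have "((\<lambda>t. W t / 2 * (Q t / t)) \<longlongrightarrow> W0 / 2 * 0) (at_right 0)"
      using lim unfolding Q_def by (intro tendsto_intros lW) auto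
    moreover have "eventually (\<lambda>t. W t / 2 * (Q t / t) = (H * sqrt (W t) * W t - M t) / t^2) (at_right 0)"
    proof (rule eventually_mono[OF ev_pos])
      fix t :: real assume t: "0 < t"
      have "W t \<noteq> 0" using Wpos[of t] by simp
      have "H * sqrt (W t) * W t - M t = W t / 2 * (t * Q t)" using key[OF t] \<open>W t \<noteq> 0\<close>
        by (simp add: field_simps)
      then show "W t / 2 * (Q t / t) = (H * sqrt (W t) * W t - M t) / t^2" using t
        by (simp add: field_simps power2_eq_square)
    qed
    ultimately show ?thesis by (rule tendsto_transfer) simp
  qed
  have "((\<lambda>t. P t / t^2) \<longlongrightarrow> 0) (at_right 0)"
  proof -
    have "((\<lambda>t. (H * sqrt (W t) * W t - M t) / t^2 * (H * sqrt (W t) * W t + M t)) \<longlongrightarrow> 0 * (H * sqrt W0 * W0 + M0)) (at_right 0)"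
      by (intro tendsto_intros hsm lW lM)
    moreover have "eventually (\<lambda>t. (H * sqrt (W t) * W t - M t) / t^2 * (H * sqrt (W t) * W t + M t) = P t / t^2) (at_right 0)"
    proof (rule always_eventually, rule allI)
      fix t
      show "(H * sqrt (W t) * W t - M t) / t^2 * (H * sqrt (W t) * W t + M t) = P t / t^2"
        unfolding prodP S P_def by (rule refl)
    qed
    ultimately show ?thesis by (rule tendsto_transfer) simp
  qed
  from jet_unique_f[OF jP this] show "(- 2*a0*b0 - 14*a0*a0*a0*b0 - 12*a0*a0*a0*a0*a0*b0 + p2*a0 + 2*p2*a0*a0*a0 + p2*a0*a0*a0*a0*a0 - 6*p1*a0*a0*a1 - 6*p1*a0*a0*a0*a0*a1 - 4*p1*p1*a0*b0 - 14*p1*p1*a0*a0*a0*b0 + p1*p1*p2*a0 + p1*p1*p2*a0*a0*a0 - 6*p1*p1*p1*a0*a0*a1 - 2*p1*p1*p1*p1*a0*b0 + 12*H*H*a0*b0 + 24*H*H*a0*a0*a0*b0 + 12*H*H*a0*a0*a0*a0*a0*b0 + 6*H*H*p1*a1 + 12*H*H*p1*a0*a0*a1 + 6*H*H*p1*a0*a0*a0*a0*a1 + 24*H*H*p1*p1*a0*b0 + 24*H*H*p1*p1*a0*a0*a0*b0 + 12*H*H*p1*p1*p1*a1 + 12*H*H*p1*p1*p1*a0*a0*a1 + 12*H*H*p1*p1*p1*p1*a0*b0 + 6*H*H*p1*p1*p1*p1*p1*a1) = 0" and "(- b0*b0 + 3*a0*d0 + a0*a2 - 36*a0*a0*b0*b0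 - 4*a0*a0*a1*a1 - 3*a0*a0*a0*d0 + 2*a0*a0*a0*a2 - 60*a0*a0*a0*a0*b0*b0 - 4*a0*a0*a0*a0*a1*a1 - 6*a0*a0*a0*a0*a0*d0 + a0*a0*a0*a0*a0*a2 + p2*b0 + 11*p2*a0*a0*b0 + 10*p2*a0*a0*a0*a0*b0 - (1/4)*p2*p2 - (1/2)*p2*p2*a0*a0 - (1/4)*p2*p2*a0*a0*a0*a0 - 14*p1*a0*a1*b0 - 8*p1*a0*a0*b1 - 44*p1*a0*a0*a0*a1*b0 - 8*p1*a0*a0*a0*a0*b1 + 3*p1*p2*a0*a1 + 3*p1*p2*a0*a0*a0*a1 - 2*p1*p1*b0*b0 + 6*p1*p1*a0*d0 + p1*p1*a0*a2 - 36*p1*p1*a0*a0*b0*b0 - 13*p1*p1*a0*a0*a1*a1 - 3*p1*p1*a0*a0*a0*d0 + p1*p1*a0*a0*a0*a2 + p1*p1*p2*b0 + 5*p1*p1*p2*a0*a0*b0 - 14*p1*p1*p1*a0*a1*b0 - 8*p1*p1*p1*a0*a0*b1 - p1*p1*p1*p1*b0*b0 + 3*p1*p1*p1*p1*a0*d0 + 12*H*H*b0*b0 + 3*H*H*a1*a1 + 6*H*H*a0*d0 + 72*H*H*a0*a0*b0*b0 + 6*H*H*a0*a0*a1*a1 + 12*H*H*a0*a0*a0*d0 + 60*H*H*a0*a0*a0*a0*b0*b0 + 3*H*H*a0*a0*a0*a0*a1*a1 + 6*H*H*a0*a0*a0*a0*a0*d0 + 6*H*H*p1*b1 + 48*H*H*p1*a0*a1*b0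 + 12*H*H*p1*a0*a0*b1 + 48*H*H*p1*a0*a0*a0*a1*b0 + 6*H*H*p1*a0*a0*a0*a0*b1 + 24*H*H*p1*p1*b0*b0 + 18*H*H*p1*p1*a1*a1 + 12*H*H*p1*p1*a0*d0 + 72*H*H*p1*p1*a0*a0*b0*b0 + 18*H*H*p1*p1*a0*a0*a1*a1 + 12*H*H*p1*p1*a0*a0*a0*d0 + 12*H*H*p1*p1*p1*b1 + 48*H*H*p1*p1*p1*a0*a1*b0 + 12*H*H*p1*p1*p1*a0*a0*b1 + 12*H*H*p1*p1*p1*p1*b0*b0 + 15*H*H*p1*p1*p1*p1*a1*a1 + 6*H*H*p1*p1*p1*p1*a0*d0 + 6*H*H*p1*p1*p1*p1*p1*b1) = 0" by simp_all
  assume H0: "H = 0"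
  have "((\<lambda>t. M t / t^2) \<longlongrightarrow> 0) (at_right 0)"
    using hsm tendsto_minus[OF hsm] by (simp add: H0)
  from jet_unique_f[OF jM this] show "(- (3/2)*d0 - (1/2)*a2 + 12*a0*b0*b0 + 2*a0*a1*a1 + 3*a0*a0*d0 - (1/2)*a0*a0*a2 - 2*p2*a0*b0 + 4*p1*a1*b0 + 4*p1*a0*b1 - (3/2)*p1*p1*d0) = 0" by simp
qed

lemma alg1:
  fixes H a p :: real
  assumes H: "\<bar>H\<bar> < 1" and a: "a = H * sqrt (1 + p^2 + a^2)"
  shows "a = H / sqrt (1 - H^2) * sqrt (1 + p^2)"
proof -
  have h2: "H^2 < 1" using H by (simp add: abs_square_less_1)
  have s0: "sqrt (1 - H^2) > 0" using h2 by simp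
  have nn: "0 \<le> 1 + p^2 + a^2" by (intro add_nonneg_nonneg) simp_all
  define X where "X = 1 + p^2 + a^2"
  have aX: "a = H * sqrt X" using a X_def by simp
  have "a^2 = H^2 * (sqrt X)^2" using aX by (simp add: power_mult_distrib)
  also have "\<dots> = H^2 * X" using nn X_def by simp
  finally have "a^2 = H^2 * (1 + p^2 + a^2)" using X_def by simp
  then have e: "a^2 * (1 - H^2) = H^2 * (1 + p^2)" by (simp add: algebra_simps)
  have "(a * sqrt (1 - H^2))^2 = (H * sqrt (1 + p^2))^2"
    using e h2 by (simp add: power_mult_distrib)
  moreover have "a * sqrt (1 - H^2) \<ge> 0 \<longleftrightarrow> H * sqrt (1 + p^2) \<ge> 0"
  proof -
    have "sqrt X > 0" using nn X_def by (simp add: add_pos_nonneg)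
    then have "a \<ge> 0 \<longleftrightarrow> H \<ge> 0" using aX by (simp add: zero_le_mult_iff)
    moreover have "sqrt (1 + p^2) > 0" by (simp add: add_pos_nonneg)
    ultimately show ?thesis using s0 by (simp add: zero_le_mult_iff)
  qed
  ultimately have "a * sqrt (1 - H^2) = H * sqrt (1 + p^2)"
    by (metis power2_eq_iff abs_of_nonneg abs_of_nonpos le_cases neg_0_le_iff_le)
  then show ?thesis using s0 by (simp add: field_simps)
qed

lemma alg2:
  fixes H p1 p2 a0 a1 b0 r g :: real
  assumes h0: "g*a0 = H*r" and h1: "g*r*a1 = H*p1*p2"
    and rr: "r^2 = 1 + p1^2" and ss: "g^2 = 1 - H^2"
    and Hn: "H \<noteq> 0" and rp: "r > 0"
    and pc: "(- 2*a0*b0 - 14*a0*a0*a0*b0 - 12*a0*a0*a0*a0*a0*b0 + p2*a0 + 2*p2*a0*a0*a0 + p2*a0*a0*a0*a0*a0 - 6*p1*a0*a0*a1 - 6*p1*a0*a0*a0*a0*a1 - 4*p1*p1*a0*b0 - 14*p1*p1*a0*a0*a0*b0 + p1*p1*p2*a0 + p1*p1*p2*a0*a0*a0 - 6*p1*p1*p1*a0*a0*a1 - 2*p1*p1*p1*p1*a0*b0 + 12*H*H*a0*b0 + 24*H*H*a0*a0*a0*b0 + 12*H*H*a0*a0*a0*a0*a0*b0 + 6*H*H*p1*a1 + 12*H*H*p1*a0*a0*a1 + 6*H*H*p1*a0*a0*a0*a0*a1 + 24*H*H*p1*p1*a0*b0 + 24*H*H*p1*p1*a0*a0*a0*b0 +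 12*H*H*p1*p1*p1*a1 + 12*H*H*p1*p1*p1*a0*a0*a1 + 12*H*H*p1*p1*p1*p1*a0*b0 + 6*H*H*p1*p1*p1*p1*p1*a1) = 0"
  shows "2*g^2*r^2*b0 = p2*(1+H^2*p1^2)"
proof -
  have "g^5*r*(- 2*a0*b0 - 14*a0*a0*a0*b0 - 12*a0*a0*a0*a0*a0*b0 + p2*a0 + 2*p2*a0*a0*a0 + p2*a0*a0*a0*a0*a0 - 6*p1*a0*a0*a1 - 6*p1*a0*a0*a0*a0*a1 - 4*p1*p1*a0*b0 - 14*p1*p1*a0*a0*a0*b0 + p1*p1*p2*a0 + p1*p1*p2*a0*a0*a0 - 6*p1*p1*p1*a0*a0*a1 - 2*p1*p1*p1*p1*a0*b0 + 12*H*H*a0*b0 + 24*H*H*a0*a0*a0*b0 + 12*H*H*a0*a0*a0*a0*a0*b0 + 6*H*H*p1*a1 + 12*H*H*p1*a0*a0*a1 + 6*H*H*p1*a0*a0*a0*a0*a1 + 24*H*H*p1*p1*a0*b0 + 24*H*H*p1*p1*a0*a0*a0*b0 + 12*H*H*p1*p1*p1*a1 + 12*H*H*p1*p1*p1*a0*a0*a1 + 12*H*H*p1*p1*p1*p1*a0*b0 + 6*H*H*p1*p1*p1*p1*p1*a1) = (- 12*b0*r*(g*a0)*(g*a0)*(g*a0)*(g*a0)*(g*a0) - 14*b0*r*g*g*(g*a0)*(g*a0)*(g*a0) - 2*b0*r*g*g*g*g*(g*a0) + p2*r*(g*a0)*(g*a0)*(g*a0)*(g*a0)*(g*a0) + 2*p2*r*g*g*(g*a0)*(g*a0)*(g*a0)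 + p2*r*g*g*g*g*(g*a0) - 6*p1*(g*a0)*(g*a0)*(g*a0)*(g*a0)*(g*r*a1) - 6*p1*g*g*(g*a0)*(g*a0)*(g*r*a1) - 14*p1*p1*b0*r*g*g*(g*a0)*(g*a0)*(g*a0) - 4*p1*p1*b0*r*g*g*g*g*(g*a0) + p1*p1*p2*r*g*g*(g*a0)*(g*a0)*(g*a0) + p1*p1*p2*r*g*g*g*g*(g*a0) - 6*p1*p1*p1*g*g*(g*a0)*(g*a0)*(g*r*a1) - 2*p1*p1*p1*p1*b0*r*g*g*g*g*(g*a0) + 12*H*H*b0*r*(g*a0)*(g*a0)*(g*a0)*(g*a0)*(g*a0) + 24*H*H*b0*r*g*g*(g*a0)*(g*a0)*(g*a0) + 12*H*H*b0*r*g*g*g*g*(g*a0) + 6*H*H*p1*(g*a0)*(g*a0)*(g*a0)*(g*a0)*(g*r*a1) + 12*H*H*p1*g*g*(g*a0)*(g*a0)*(g*r*a1) + 6*H*H*p1*g*g*g*g*(g*r*a1) + 24*H*H*p1*p1*b0*r*g*g*(g*a0)*(g*a0)*(g*a0) + 24*H*H*p1*p1*b0*r*g*g*g*g*(g*a0) + 12*H*H*p1*p1*p1*g*g*(g*a0)*(g*a0)*(g*r*a1) + 12*H*H*p1*p1*p1*g*g*g*g*(g*r*a1) + 12*H*H*p1*p1*p1*p1*b0*r*g*g*g*g*(g*a0) + 6*H*H*p1*p1*p1*p1*p1*g*g*g*g*(g*r*a1))" by (simp add: algebra_simps power2_eq_square eval_nat_numeral)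
  also have "\<dots> = H*r^4*(p2*(1+H^2*p1^2)-2*g^2*r^2*b0) + (- 2*H*b0*r*r*g*g*g*g - 2*H*b0*r*r*r*r*g*g*g*g + H*p2*r*r*g*g*g*g - 2*H*p1*p1*b0*r*r*g*g*g*g + 12*H*H*H*b0*r*r*g*g*g*g - 14*H*H*H*b0*r*r*r*r*g*g + 12*H*H*H*b0*r*r*r*r*g*g*g*g - H*H*H*p2*r*r*r*r - 5*H*H*H*p2*r*r*r*r*g*g + 6*H*H*H*p2*r*r*r*r*g*g*g*g + 12*H*H*H*p1*p1*b0*r*r*g*g*g*g + 6*H*H*H*p1*p1*p2*g*g*g*g - 6*H*H*H*p1*p1*p2*r*r*g*g + 6*H*H*H*p1*p1*p2*r*r*g*g*g*g + 6*H*H*H*p1*p1*p1*p1*p2*g*g*g*g + 24*H*H*H*H*H*b0*r*r*r*r*g*g - 6*H*H*H*H*H*p2*r*r*r*r + 12*H*H*H*H*H*p2*r*r*r*r*g*g + 12*H*H*H*H*H*p1*p1*p2*r*r*g*g + 6*H*H*H*H*H*H*H*p2*r*r*r*r) * (p1^2 - (r^2-1)) + (- 2*H*b0*r*r*r*r*r*r*g*g + H*p2*r*r*r*r + H*p2*r*r*r*r*g*g + 12*H*H*H*b0*r*r*r*r*r*r*g*g - 6*H*H*H*p2*r*r*r*r*g*g + H*H*H*p2*r*r*r*r*r*r + 6*H*H*H*p2*r*r*r*r*r*r*g*g + 12*H*H*H*H*H*b0*r*r*r*r*r*r - 6*H*H*H*H*H*p2*r*r*r*r + 6*H*H*H*H*H*p2*r*r*r*r*r*r)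 * (H^2 - (1 - g^2))"
    apply (simp only: h0 h1) by (simp add: algebra_simps power2_eq_square eval_nat_numeral)
  finally have "H*r^4*(p2*(1+H^2*p1^2)-2*g^2*r^2*b0) = 0" using pc rr ss by simp
  then show ?thesis using Hn rp by simp
qed

lemma alg3:
  fixes H p1 p2 p3 a0 a1 a2 b0 b1 b2 d0 d1 d2 r g :: real
  assumes h0: "g*a0 = H*r" and h1: "g*r*a1 = H*p1*p2"
    and h2: "g*r*r*r*a2 = H*((p2*p2+p1*p3)*r*r - p1*p1*p2*p2)"
    and h3: "2*g*g*r*r*b0 = p2*(1+H*H*p1*p1)"
    and h4: "2*g*g*r*r*r*r*b1 = (p3*(1+H*H*p1*p1) + 2*H*H*p1*p2*p2)*r*r - 2*p1*p2*p2*(1+H*H*p1*p1)"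
    and rr: "r^2 = 1 + p1^2" and ss: "g^2 = 1 - H^2"
    and Hn: "H \<noteq> 0" and rp: "r > 0" and sp: "g > 0"
    and pc: "(- b0*b0 + 3*a0*d0 + a0*a2 - 36*a0*a0*b0*b0 - 4*a0*a0*a1*a1 - 3*a0*a0*a0*d0 + 2*a0*a0*a0*a2 - 60*a0*a0*a0*a0*b0*b0 - 4*a0*a0*a0*a0*a1*a1 - 6*a0*a0*a0*a0*a0*d0 + a0*a0*a0*a0*a0*a2 + p2*b0 + 11*p2*a0*a0*b0 + 10*p2*a0*a0*a0*a0*b0 - (1/4)*p2*p2 - (1/2)*p2*p2*a0*a0 - (1/4)*p2*p2*a0*a0*a0*a0 - 14*p1*a0*a1*b0 - 8*p1*a0*a0*b1 - 44*p1*a0*a0*a0*a1*b0 - 8*p1*a0*a0*a0*a0*b1 + 3*p1*p2*a0*a1 + 3*p1*p2*a0*a0*a0*a1 - 2*p1*p1*b0*b0 + 6*p1*p1*a0*d0 + p1*p1*a0*a2 - 36*p1*p1*a0*a0*b0*b0 - 13*p1*p1*a0*a0*a1*a1 - 3*p1*p1*a0*a0*a0*d0 + p1*p1*a0*a0*a0*a2 + p1*p1*p2*b0 + 5*p1*p1*p2*a0*a0*b0 - 14*p1*p1*p1*a0*a1*b0 - 8*p1*p1*p1*a0*a0*b1 - p1*p1*p1*p1*b0*b0 + 3*p1*p1*p1*p1*a0*d0 + 12*H*H*b0*b0 + 3*H*H*a1*a1 + 6*H*H*a0*d0 + 72*H*H*a0*a0*b0*b0 + 6*H*H*a0*a0*a1*a1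 + 12*H*H*a0*a0*a0*d0 + 60*H*H*a0*a0*a0*a0*b0*b0 + 3*H*H*a0*a0*a0*a0*a1*a1 + 6*H*H*a0*a0*a0*a0*a0*d0 + 6*H*H*p1*b1 + 48*H*H*p1*a0*a1*b0 + 12*H*H*p1*a0*a0*b1 + 48*H*H*p1*a0*a0*a0*a1*b0 + 6*H*H*p1*a0*a0*a0*a0*b1 + 24*H*H*p1*p1*b0*b0 + 18*H*H*p1*p1*a1*a1 + 12*H*H*p1*p1*a0*d0 + 72*H*H*p1*p1*a0*a0*b0*b0 + 18*H*H*p1*p1*a0*a0*a1*a1 + 12*H*H*p1*p1*a0*a0*a0*d0 + 12*H*H*p1*p1*p1*b1 + 48*H*H*p1*p1*p1*a0*a1*b0 + 12*H*H*p1*p1*p1*a0*a0*b1 + 12*H*H*p1*p1*p1*p1*b0*b0 + 15*H*H*p1*p1*p1*p1*a1*a1 + 6*H*H*p1*p1*p1*p1*a0*d0 + 6*H*H*p1*p1*p1*p1*p1*b1) = 0"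
  shows "d0 = 0"
proof -
  have e0: "4 * (- b0*b0 + 3*a0*d0 + a0*a2 - 36*a0*a0*b0*b0 - 4*a0*a0*a1*a1 - 3*a0*a0*a0*d0 + 2*a0*a0*a0*a2 - 60*a0*a0*a0*a0*b0*b0 - 4*a0*a0*a0*a0*a1*a1 - 6*a0*a0*a0*a0*a0*d0 + a0*a0*a0*a0*a0*a2 + p2*b0 + 11*p2*a0*a0*b0 + 10*p2*a0*a0*a0*a0*b0 - (1/4)*p2*p2 - (1/2)*p2*p2*a0*a0 - (1/4)*p2*p2*a0*a0*a0*a0 - 14*p1*a0*a1*b0 - 8*p1*a0*a0*b1 - 44*p1*a0*a0*a0*a1*b0 - 8*p1*a0*a0*a0*a0*b1 + 3*p1*p2*a0*a1 + 3*p1*p2*a0*a0*a0*a1 - 2*p1*p1*b0*b0 + 6*p1*p1*a0*d0 + p1*p1*a0*a2 - 36*p1*p1*a0*a0*b0*b0 - 13*p1*p1*a0*a0*a1*a1 - 3*p1*p1*a0*a0*a0*d0 + p1*p1*a0*a0*a0*a2 + p1*p1*p2*b0 + 5*p1*p1*p2*a0*a0*b0 - 14*p1*p1*p1*a0*a1*b0 - 8*p1*p1*p1*a0*a0*b1 - p1*p1*p1*p1*b0*b0 + 3*p1*p1*p1*p1*a0*d0 + 12*H*H*b0*b0 + 3*H*H*a1*a1 + 6*H*H*a0*d0 + 72*H*H*a0*a0*b0*b0 + 6*H*H*a0*a0*a1*a1 + 12*H*H*a0*a0*a0*d0 + 60*H*H*a0*a0*a0*a0*b0*b0 + 3*H*H*a0*a0*a0*a0*a1*a1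 + 6*H*H*a0*a0*a0*a0*a0*d0 + 6*H*H*p1*b1 + 48*H*H*p1*a0*a1*b0 + 12*H*H*p1*a0*a0*b1 + 48*H*H*p1*a0*a0*a0*a1*b0 + 6*H*H*p1*a0*a0*a0*a0*b1 + 24*H*H*p1*p1*b0*b0 + 18*H*H*p1*p1*a1*a1 + 12*H*H*p1*p1*a0*d0 + 72*H*H*p1*p1*a0*a0*b0*b0 + 18*H*H*p1*p1*a0*a0*a1*a1 + 12*H*H*p1*p1*a0*a0*a0*d0 + 12*H*H*p1*p1*p1*b1 + 48*H*H*p1*p1*p1*a0*a1*b0 + 12*H*H*p1*p1*p1*a0*a0*b1 + 12*H*H*p1*p1*p1*p1*b0*b0 + 15*H*H*p1*p1*p1*p1*a1*a1 + 6*H*H*p1*p1*p1*p1*a0*d0 + 6*H*H*p1*p1*p1*p1*p1*b1) = (- 4*b0*b0 + 12*a0*d0 + 4*a0*a2 - 144*a0*a0*b0*b0 - 16*a0*a0*a1*a1 - 12*a0*a0*a0*d0 + 8*a0*a0*a0*a2 - 240*a0*a0*a0*a0*b0*b0 - 16*a0*a0*a0*a0*a1*a1 - 24*a0*a0*a0*a0*a0*d0 + 4*a0*a0*a0*a0*a0*a2 + 4*p2*b0 + 44*p2*a0*a0*b0 + 40*p2*a0*a0*a0*a0*b0 - p2*p2 - 2*p2*p2*a0*a0 - p2*p2*a0*a0*a0*a0 - 56*p1*a0*a1*b0 - 32*p1*a0*a0*b1 - 176*p1*a0*a0*a0*a1*b0 - 32*p1*a0*a0*a0*a0*b1 + 12*p1*p2*a0*a1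 + 12*p1*p2*a0*a0*a0*a1 - 8*p1*p1*b0*b0 + 24*p1*p1*a0*d0 + 4*p1*p1*a0*a2 - 144*p1*p1*a0*a0*b0*b0 - 52*p1*p1*a0*a0*a1*a1 - 12*p1*p1*a0*a0*a0*d0 + 4*p1*p1*a0*a0*a0*a2 + 4*p1*p1*p2*b0 + 20*p1*p1*p2*a0*a0*b0 - 56*p1*p1*p1*a0*a1*b0 - 32*p1*p1*p1*a0*a0*b1 - 4*p1*p1*p1*p1*b0*b0 + 12*p1*p1*p1*p1*a0*d0 + 48*H*H*b0*b0 + 12*H*H*a1*a1 + 24*H*H*a0*d0 + 288*H*H*a0*a0*b0*b0 + 24*H*H*a0*a0*a1*a1 + 48*H*H*a0*a0*a0*d0 + 240*H*H*a0*a0*a0*a0*b0*b0 + 12*H*H*a0*a0*a0*a0*a1*a1 + 24*H*H*a0*a0*a0*a0*a0*d0 + 24*H*H*p1*b1 + 192*H*H*p1*a0*a1*b0 + 48*H*H*p1*a0*a0*b1 + 192*H*H*p1*a0*a0*a0*a1*b0 + 24*H*H*p1*a0*a0*a0*a0*b1 + 96*H*H*p1*p1*b0*b0 + 72*H*H*p1*p1*a1*a1 + 48*H*H*p1*p1*a0*d0 + 288*H*H*p1*p1*a0*a0*b0*b0 + 72*H*H*p1*p1*a0*a0*a1*a1 + 48*H*H*p1*p1*a0*a0*a0*d0 + 48*H*H*p1*p1*p1*b1 + 192*H*H*p1*p1*p1*a0*a1*b0 + 48*H*H*p1*p1*p1*a0*a0*b1 + 48*H*H*p1*p1*p1*p1*b0*b0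 + 60*H*H*p1*p1*p1*p1*a1*a1 + 24*H*H*p1*p1*p1*p1*a0*d0 + 24*H*H*p1*p1*p1*p1*p1*b1)" by (simp add: algebra_simps)
  have "g^8*r^4*(- 4*b0*b0 + 12*a0*d0 + 4*a0*a2 - 144*a0*a0*b0*b0 - 16*a0*a0*a1*a1 - 12*a0*a0*a0*d0 + 8*a0*a0*a0*a2 - 240*a0*a0*a0*a0*b0*b0 - 16*a0*a0*a0*a0*a1*a1 - 24*a0*a0*a0*a0*a0*d0 + 4*a0*a0*a0*a0*a0*a2 + 4*p2*b0 + 44*p2*a0*a0*b0 + 40*p2*a0*a0*a0*a0*b0 - p2*p2 - 2*p2*p2*a0*a0 - p2*p2*a0*a0*a0*a0 - 56*p1*a0*a1*b0 - 32*p1*a0*a0*b1 - 176*p1*a0*a0*a0*a1*b0 - 32*p1*a0*a0*a0*a0*b1 + 12*p1*p2*a0*a1 + 12*p1*p2*a0*a0*a0*a1 - 8*p1*p1*b0*b0 + 24*p1*p1*a0*d0 + 4*p1*p1*a0*a2 - 144*p1*p1*a0*a0*b0*b0 - 52*p1*p1*a0*a0*a1*a1 - 12*p1*p1*a0*a0*a0*d0 + 4*p1*p1*a0*a0*a0*a2 + 4*p1*p1*p2*b0 + 20*p1*p1*p2*a0*a0*b0 - 56*p1*p1*p1*a0*a1*b0 - 32*p1*p1*p1*a0*a0*b1 - 4*p1*p1*p1*p1*b0*b0 + 12*p1*p1*p1*p1*a0*d0 + 48*H*H*b0*b0 + 12*H*H*a1*a1 + 24*H*H*a0*d0 + 288*H*H*a0*a0*b0*b0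 + 24*H*H*a0*a0*a1*a1 + 48*H*H*a0*a0*a0*d0 + 240*H*H*a0*a0*a0*a0*b0*b0 + 12*H*H*a0*a0*a0*a0*a1*a1 + 24*H*H*a0*a0*a0*a0*a0*d0 + 24*H*H*p1*b1 + 192*H*H*p1*a0*a1*b0 + 48*H*H*p1*a0*a0*b1 + 192*H*H*p1*a0*a0*a0*a1*b0 + 24*H*H*p1*a0*a0*a0*a0*b1 + 96*H*H*p1*p1*b0*b0 + 72*H*H*p1*p1*a1*a1 + 48*H*H*p1*p1*a0*d0 + 288*H*H*p1*p1*a0*a0*b0*b0 + 72*H*H*p1*p1*a0*a0*a1*a1 + 48*H*H*p1*p1*a0*a0*a0*d0 + 48*H*H*p1*p1*p1*b1 + 192*H*H*p1*p1*p1*a0*a1*b0 + 48*H*H*p1*p1*p1*a0*a0*b1 + 48*H*H*p1*p1*p1*p1*b0*b0 + 60*H*H*p1*p1*p1*p1*a1*a1 + 24*H*H*p1*p1*p1*p1*a0*d0 + 24*H*H*p1*p1*p1*p1*p1*b1) = (- 60*(g*a0)*(g*a0)*(g*a0)*(g*a0)*(2*g*g*r*r*b0)*(2*g*g*r*r*b0) - 36*g*g*(g*a0)*(g*a0)*(2*g*g*r*r*b0)*(2*g*g*r*r*b0) - g*g*g*g*(2*g*g*r*r*b0)*(2*g*g*r*r*b0) + 4*r*g*g*(g*a0)*(g*a0)*(g*a0)*(g*a0)*(g*a0)*(g*r*r*r*a2) + 8*r*g*g*g*g*(g*a0)*(g*a0)*(g*a0)*(g*r*r*r*a2) + 4*r*g*g*g*g*g*g*(g*a0)*(g*r*r*r*a2)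 - 16*r*r*g*g*(g*a0)*(g*a0)*(g*a0)*(g*a0)*(g*r*a1)*(g*r*a1) - 16*r*r*g*g*g*g*(g*a0)*(g*a0)*(g*r*a1)*(g*r*a1) - 24*d0*r*r*r*r*g*g*g*(g*a0)*(g*a0)*(g*a0)*(g*a0)*(g*a0) - 12*d0*r*r*r*r*g*g*g*g*g*(g*a0)*(g*a0)*(g*a0) + 12*d0*r*r*r*r*g*g*g*g*g*g*g*(g*a0) + 20*p2*r*r*g*g*(g*a0)*(g*a0)*(g*a0)*(g*a0)*(2*g*g*r*r*b0) + 22*p2*r*r*g*g*g*g*(g*a0)*(g*a0)*(2*g*g*r*r*b0) + 2*p2*r*r*g*g*g*g*g*g*(2*g*g*r*r*b0) - p2*p2*r*r*r*r*g*g*g*g*(g*a0)*(g*a0)*(g*a0)*(g*a0) - 2*p2*p2*r*r*r*r*g*g*g*g*g*g*(g*a0)*(g*a0) - p2*p2*r*r*r*r*g*g*g*g*g*g*g*g - 16*p1*g*g*(g*a0)*(g*a0)*(g*a0)*(g*a0)*(2*g*g*r*r*r*r*b1) - 16*p1*g*g*g*g*(g*a0)*(g*a0)*(2*g*g*r*r*r*r*b1) - 88*p1*r*g*g*(g*a0)*(g*a0)*(g*a0)*(g*r*a1)*(2*g*g*r*r*b0) - 28*p1*r*g*g*g*g*(g*a0)*(g*r*a1)*(2*g*g*r*r*b0) + 12*p1*p2*r*r*r*g*g*g*g*(g*a0)*(g*a0)*(g*a0)*(g*r*a1) + 12*p1*p2*r*r*r*g*g*g*g*g*g*(g*a0)*(g*r*a1)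 - 36*p1*p1*g*g*(g*a0)*(g*a0)*(2*g*g*r*r*b0)*(2*g*g*r*r*b0) - 2*p1*p1*g*g*g*g*(2*g*g*r*r*b0)*(2*g*g*r*r*b0) + 4*p1*p1*r*g*g*g*g*(g*a0)*(g*a0)*(g*a0)*(g*r*r*r*a2) + 4*p1*p1*r*g*g*g*g*g*g*(g*a0)*(g*r*r*r*a2) - 52*p1*p1*r*r*g*g*g*g*(g*a0)*(g*a0)*(g*r*a1)*(g*r*a1) - 12*p1*p1*d0*r*r*r*r*g*g*g*g*g*(g*a0)*(g*a0)*(g*a0) + 24*p1*p1*d0*r*r*r*r*g*g*g*g*g*g*g*(g*a0) + 10*p1*p1*p2*r*r*g*g*g*g*(g*a0)*(g*a0)*(2*g*g*r*r*b0) + 2*p1*p1*p2*r*r*g*g*g*g*g*g*(2*g*g*r*r*b0) - 16*p1*p1*p1*g*g*g*g*(g*a0)*(g*a0)*(2*g*g*r*r*r*r*b1) - 28*p1*p1*p1*r*g*g*g*g*(g*a0)*(g*r*a1)*(2*g*g*r*r*b0) - p1*p1*p1*p1*g*g*g*g*(2*g*g*r*r*b0)*(2*g*g*r*r*b0) + 12*p1*p1*p1*p1*d0*r*r*r*r*g*g*g*g*g*g*g*(g*a0) + 60*H*H*(g*a0)*(g*a0)*(g*a0)*(g*a0)*(2*g*g*r*r*b0)*(2*g*g*r*r*b0) + 72*H*H*g*g*(g*a0)*(g*a0)*(2*g*g*r*r*b0)*(2*g*g*r*r*b0) + 12*H*H*g*g*g*g*(2*g*g*r*r*b0)*(2*g*g*r*r*b0)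 + 12*H*H*r*r*g*g*(g*a0)*(g*a0)*(g*a0)*(g*a0)*(g*r*a1)*(g*r*a1) + 24*H*H*r*r*g*g*g*g*(g*a0)*(g*a0)*(g*r*a1)*(g*r*a1) + 12*H*H*r*r*g*g*g*g*g*g*(g*r*a1)*(g*r*a1) + 24*H*H*d0*r*r*r*r*g*g*g*(g*a0)*(g*a0)*(g*a0)*(g*a0)*(g*a0) + 48*H*H*d0*r*r*r*r*g*g*g*g*g*(g*a0)*(g*a0)*(g*a0) + 24*H*H*d0*r*r*r*r*g*g*g*g*g*g*g*(g*a0) + 12*H*H*p1*g*g*(g*a0)*(g*a0)*(g*a0)*(g*a0)*(2*g*g*r*r*r*r*b1) + 24*H*H*p1*g*g*g*g*(g*a0)*(g*a0)*(2*g*g*r*r*r*r*b1) + 12*H*H*p1*g*g*g*g*g*g*(2*g*g*r*r*r*r*b1) + 96*H*H*p1*r*g*g*(g*a0)*(g*a0)*(g*a0)*(g*r*a1)*(2*g*g*r*r*b0) + 96*H*H*p1*r*g*g*g*g*(g*a0)*(g*r*a1)*(2*g*g*r*r*b0) + 72*H*H*p1*p1*g*g*(g*a0)*(g*a0)*(2*g*g*r*r*b0)*(2*g*g*r*r*b0) + 24*H*H*p1*p1*g*g*g*g*(2*g*g*r*r*b0)*(2*g*g*r*r*b0) + 72*H*H*p1*p1*r*r*g*g*g*g*(g*a0)*(g*a0)*(g*r*a1)*(g*r*a1) + 72*H*H*p1*p1*r*r*g*g*g*g*g*g*(g*r*a1)*(g*r*a1) + 48*H*H*p1*p1*d0*r*r*r*r*g*g*g*g*g*(g*a0)*(g*a0)*(g*a0)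 + 48*H*H*p1*p1*d0*r*r*r*r*g*g*g*g*g*g*g*(g*a0) + 24*H*H*p1*p1*p1*g*g*g*g*(g*a0)*(g*a0)*(2*g*g*r*r*r*r*b1) + 24*H*H*p1*p1*p1*g*g*g*g*g*g*(2*g*g*r*r*r*r*b1) + 96*H*H*p1*p1*p1*r*g*g*g*g*(g*a0)*(g*r*a1)*(2*g*g*r*r*b0) + 12*H*H*p1*p1*p1*p1*g*g*g*g*(2*g*g*r*r*b0)*(2*g*g*r*r*b0) + 60*H*H*p1*p1*p1*p1*r*r*g*g*g*g*g*g*(g*r*a1)*(g*r*a1) + 24*H*H*p1*p1*p1*p1*d0*r*r*r*r*g*g*g*g*g*g*g*(g*a0) + 12*H*H*p1*p1*p1*p1*p1*g*g*g*g*g*g*(2*g*g*r*r*r*r*b1))" by (simp add: algebra_simps power2_eq_square eval_nat_numeral)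
  also have "\<dots> = 12*H*d0*r^9*g^5 + (- p2*p2*g*g*g*g - p2*p2*r*r*g*g*g*g + 2*p2*p2*r*r*g*g*g*g*g*g - p1*p1*p2*p2*g*g*g*g + 12*H*d0*r*r*r*r*r*g*g*g*g*g*g*g + 12*H*d0*r*r*r*r*r*r*r*g*g*g*g*g*g*g + 12*H*p1*p1*d0*r*r*r*r*r*g*g*g*g*g*g*g + 12*H*H*p2*p2*g*g*g*g - 36*H*H*p2*p2*r*r*g*g + 12*H*H*p2*p2*r*r*g*g*g*g + 12*H*H*p2*p2*r*r*r*r*g*g*g*g - 10*H*H*p2*p2*r*r*r*r*g*g*g*g*g*g + 12*H*H*p1*p3*r*r*g*g*g*g*g*g - 16*H*H*p1*p3*r*r*r*r*g*g*g*g + 16*H*H*p1*p3*r*r*r*r*g*g*g*g*g*g + 10*H*H*p1*p1*p2*p2*g*g*g*g - 24*H*H*p1*p1*p2*p2*g*g*g*g*g*g + 2*H*H*p1*p1*p2*p2*r*r*g*g*g*g - 26*H*H*p1*p1*p2*p2*r*r*g*g*g*g*g*g + 12*H*H*p1*p1*p1*p3*r*r*g*g*g*g*g*g - 2*H*H*p1*p1*p1*p1*p2*p2*g*g*g*g - 24*H*H*p1*p1*p1*p1*p2*p2*g*g*g*g*g*g + 24*H*H*H*d0*r*r*r*r*r*g*g*g*g*g*g*g - 12*H*H*H*d0*r*r*r*r*r*r*r*g*g*g*g*g + 24*H*H*H*d0*r*r*r*r*r*r*r*g*g*g*g*g*g*g + 24*H*H*H*p1*p1*d0*r*r*r*r*r*g*g*g*g*g*g*g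 + 72*H*H*H*H*p2*p2*r*r*g*g - 128*H*H*H*H*p2*p2*r*r*r*r*g*g + 113*H*H*H*H*p2*p2*r*r*r*r*g*g*g*g - 24*H*H*H*H*p2*p2*r*r*r*r*g*g*g*g*g*g - 59*H*H*H*H*p2*p2*r*r*r*r*r*r*g*g*g*g + 60*H*H*H*H*p2*p2*r*r*r*r*r*r*g*g*g*g*g*g + 24*H*H*H*H*p1*p3*r*r*r*r*g*g*g*g - 12*H*H*H*H*p1*p3*r*r*r*r*r*r*g*g*g*g + 12*H*H*H*H*p1*p3*r*r*r*r*r*r*g*g*g*g*g*g + 24*H*H*H*H*p1*p1*p2*p2*g*g*g*g - 72*H*H*H*H*p1*p1*p2*p2*r*r*g*g + 72*H*H*H*H*p1*p1*p2*p2*r*r*g*g*g*g + 36*H*H*H*H*p1*p1*p2*p2*r*r*g*g*g*g*g*g - 75*H*H*H*H*p1*p1*p2*p2*r*r*r*r*g*g*g*g + 60*H*H*H*H*p1*p1*p2*p2*r*r*r*r*g*g*g*g*g*g + 12*H*H*H*H*p1*p1*p1*p3*r*r*g*g*g*g*g*g - 16*H*H*H*H*p1*p1*p1*p3*r*r*r*r*g*g*g*g + 12*H*H*H*H*p1*p1*p1*p3*r*r*r*r*g*g*g*g*g*g + 23*H*H*H*H*p1*p1*p1*p1*p2*p2*g*g*g*g - 24*H*H*H*H*p1*p1*p1*p1*p2*p2*g*g*g*g*g*g + 3*H*H*H*H*p1*p1*p1*p1*p2*p2*r*r*g*g*g*g + 60*H*H*H*H*p1*p1*p1*p1*p2*p2*r*r*g*g*g*g*g*g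 + 12*H*H*H*H*p1*p1*p1*p1*p1*p3*r*r*g*g*g*g*g*g - H*H*H*H*p1*p1*p1*p1*p1*p1*p2*p2*g*g*g*g - 24*H*H*H*H*p1*p1*p1*p1*p1*p1*p2*p2*g*g*g*g*g*g + 48*H*H*H*H*H*d0*r*r*r*r*r*r*r*g*g*g*g*g - 120*H*H*H*H*H*H*p2*p2*r*r*r*r + 308*H*H*H*H*H*H*p2*p2*r*r*r*r*g*g - 108*H*H*H*H*H*H*p2*p2*r*r*r*r*g*g*g*g - 124*H*H*H*H*H*H*p2*p2*r*r*r*r*r*r*g*g + 180*H*H*H*H*H*H*p2*p2*r*r*r*r*r*r*g*g*g*g - 16*H*H*H*H*H*H*p1*p3*r*r*r*r*r*r*g*g + 24*H*H*H*H*H*H*p1*p3*r*r*r*r*r*r*g*g*g*g + 144*H*H*H*H*H*H*p1*p1*p2*p2*r*r*g*g - 92*H*H*H*H*H*H*p1*p1*p2*p2*r*r*r*r*g*g + 180*H*H*H*H*H*H*p1*p1*p2*p2*r*r*r*r*g*g*g*g + 24*H*H*H*H*H*H*p1*p1*p1*p3*r*r*r*r*g*g*g*g + 12*H*H*H*H*H*H*p1*p1*p1*p1*p2*p2*g*g*g*g - 36*H*H*H*H*H*H*p1*p1*p1*p1*p2*p2*r*r*g*g + 60*H*H*H*H*H*H*p1*p1*p1*p1*p2*p2*r*r*g*g*g*g + 12*H*H*H*H*H*H*p1*p1*p1*p1*p1*p1*p2*p2*g*g*g*g + 180*H*H*H*H*H*H*H*H*p2*p2*r*r*r*r - 144*H*H*H*H*H*H*H*H*p2*p2*r*r*r*r*g*g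 - 60*H*H*H*H*H*H*H*H*p2*p2*r*r*r*r*r*r + 180*H*H*H*H*H*H*H*H*p2*p2*r*r*r*r*r*r*g*g + 12*H*H*H*H*H*H*H*H*p1*p3*r*r*r*r*r*r*g*g - 60*H*H*H*H*H*H*H*H*p1*p1*p2*p2*r*r*r*r + 144*H*H*H*H*H*H*H*H*p1*p1*p2*p2*r*r*r*r*g*g + 72*H*H*H*H*H*H*H*H*p1*p1*p1*p1*p2*p2*r*r*g*g - 60*H*H*H*H*H*H*H*H*H*H*p2*p2*r*r*r*r + 60*H*H*H*H*H*H*H*H*H*H*p2*p2*r*r*r*r*r*r + 60*H*H*H*H*H*H*H*H*H*H*p1*p1*p2*p2*r*r*r*r) * (p1^2 - (r^2-1)) + (p2*p2*r*r*r*r*g*g*g*g - p2*p2*r*r*r*r*g*g*g*g*g*g + 12*H*d0*r*r*r*r*r*r*r*r*r*g*g*g*g*g + 36*H*H*p2*p2*r*r*r*r*g*g + 15*H*H*p2*p2*r*r*r*r*g*g*g*g - 12*H*H*p2*p2*r*r*r*r*r*r*g*g*g*g + 16*H*H*p1*p3*r*r*r*r*r*r*g*g*g*g + 24*H*H*H*d0*r*r*r*r*r*r*r*r*r*g*g*g*g*g + 60*H*H*H*H*p2*p2*r*r*r*r - 104*H*H*H*H*p2*p2*r*r*r*r*g*g + 24*H*H*H*H*p2*p2*r*r*r*r*g*g*g*g + 108*H*H*H*H*p2*p2*r*r*r*r*r*r*g*g - 84*H*H*H*H*p2*p2*r*r*r*r*r*r*g*g*g*g + 60*H*H*H*H*p2*p2*r*r*r*r*r*r*r*r*g*g*g*g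 + 16*H*H*H*H*p1*p3*r*r*r*r*r*r*g*g - 12*H*H*H*H*p1*p3*r*r*r*r*r*r*g*g*g*g + 12*H*H*H*H*p1*p3*r*r*r*r*r*r*r*r*g*g*g*g + 24*H*H*H*H*H*d0*r*r*r*r*r*r*r*r*r*g*g*g - 120*H*H*H*H*H*H*p2*p2*r*r*r*r + 84*H*H*H*H*H*H*p2*p2*r*r*r*r*g*g + 120*H*H*H*H*H*H*p2*p2*r*r*r*r*r*r - 204*H*H*H*H*H*H*p2*p2*r*r*r*r*r*r*g*g + 120*H*H*H*H*H*H*p2*p2*r*r*r*r*r*r*r*r*g*g - 12*H*H*H*H*H*H*p1*p3*r*r*r*r*r*r*g*g + 12*H*H*H*H*H*H*p1*p3*r*r*r*r*r*r*r*r*g*g + 60*H*H*H*H*H*H*H*H*p2*p2*r*r*r*r - 120*H*H*H*H*H*H*H*H*p2*p2*r*r*r*r*r*r + 60*H*H*H*H*H*H*H*H*p2*p2*r*r*r*r*r*r*r*r) * (H^2 - (1 - g^2))"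
    apply (simp only: h0 h1 h2 h3 h4) by (simp add: algebra_simps power2_eq_square eval_nat_numeral)
  finally have c: "g^8*r^4*(- 4*b0*b0 + 12*a0*d0 + 4*a0*a2 - 144*a0*a0*b0*b0 - 16*a0*a0*a1*a1 - 12*a0*a0*a0*d0 + 8*a0*a0*a0*a2 - 240*a0*a0*a0*a0*b0*b0 - 16*a0*a0*a0*a0*a1*a1 - 24*a0*a0*a0*a0*a0*d0 + 4*a0*a0*a0*a0*a0*a2 + 4*p2*b0 + 44*p2*a0*a0*b0 + 40*p2*a0*a0*a0*a0*b0 - p2*p2 - 2*p2*p2*a0*a0 - p2*p2*a0*a0*a0*a0 - 56*p1*a0*a1*b0 - 32*p1*a0*a0*b1 - 176*p1*a0*a0*a0*a1*b0 - 32*p1*a0*a0*a0*a0*b1 + 12*p1*p2*a0*a1 + 12*p1*p2*a0*a0*a0*a1 - 8*p1*p1*b0*b0 + 24*p1*p1*a0*d0 + 4*p1*p1*a0*a2 - 144*p1*p1*a0*a0*b0*b0 - 52*p1*p1*a0*a0*a1*a1 - 12*p1*p1*a0*a0*a0*d0 + 4*p1*p1*a0*a0*a0*a2 + 4*p1*p1*p2*b0 + 20*p1*p1*p2*a0*a0*b0 - 56*p1*p1*p1*a0*a1*b0 - 32*p1*p1*p1*a0*a0*b1 - 4*p1*p1*p1*p1*b0*b0 + 12*p1*p1*p1*p1*a0*d0 + 48*H*H*b0*b0 + 12*H*H*a1*a1 + 24*H*H*a0*d0 + 288*H*H*a0*a0*b0*b0 + 24*H*H*a0*a0*a1*a1 +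 48*H*H*a0*a0*a0*d0 + 240*H*H*a0*a0*a0*a0*b0*b0 + 12*H*H*a0*a0*a0*a0*a1*a1 + 24*H*H*a0*a0*a0*a0*a0*d0 + 24*H*H*p1*b1 + 192*H*H*p1*a0*a1*b0 + 48*H*H*p1*a0*a0*b1 + 192*H*H*p1*a0*a0*a0*a1*b0 + 24*H*H*p1*a0*a0*a0*a0*b1 + 96*H*H*p1*p1*b0*b0 + 72*H*H*p1*p1*a1*a1 + 48*H*H*p1*p1*a0*d0 + 288*H*H*p1*p1*a0*a0*b0*b0 + 72*H*H*p1*p1*a0*a0*a1*a1 + 48*H*H*p1*p1*a0*a0*a0*d0 + 48*H*H*p1*p1*p1*b1 + 192*H*H*p1*p1*p1*a0*a1*b0 + 48*H*H*p1*p1*p1*a0*a0*b1 + 48*H*H*p1*p1*p1*p1*b0*b0 + 60*H*H*p1*p1*p1*p1*a1*a1 + 24*H*H*p1*p1*p1*p1*a0*d0 + 24*H*H*p1*p1*p1*p1*p1*b1) = 12*H*d0*r^9*g^5 + (- p2*p2*g*g*g*g - p2*p2*r*r*g*g*g*g + 2*p2*p2*r*r*g*g*g*g*g*g - p1*p1*p2*p2*g*g*g*g + 12*H*d0*r*r*r*r*r*g*g*g*g*g*g*g + 12*H*d0*r*r*r*r*r*r*r*g*g*g*g*g*g*g + 12*H*p1*p1*d0*r*r*r*r*r*g*g*g*g*g*g*g + 12*H*H*p2*p2*g*g*g*g - 36*H*H*p2*p2*r*r*g*g + 12*H*H*p2*p2*r*r*g*g*g*g + 12*H*H*p2*p2*r*r*r*r*g*g*g*g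 - 10*H*H*p2*p2*r*r*r*r*g*g*g*g*g*g + 12*H*H*p1*p3*r*r*g*g*g*g*g*g - 16*H*H*p1*p3*r*r*r*r*g*g*g*g + 16*H*H*p1*p3*r*r*r*r*g*g*g*g*g*g + 10*H*H*p1*p1*p2*p2*g*g*g*g - 24*H*H*p1*p1*p2*p2*g*g*g*g*g*g + 2*H*H*p1*p1*p2*p2*r*r*g*g*g*g - 26*H*H*p1*p1*p2*p2*r*r*g*g*g*g*g*g + 12*H*H*p1*p1*p1*p3*r*r*g*g*g*g*g*g - 2*H*H*p1*p1*p1*p1*p2*p2*g*g*g*g - 24*H*H*p1*p1*p1*p1*p2*p2*g*g*g*g*g*g + 24*H*H*H*d0*r*r*r*r*r*g*g*g*g*g*g*g - 12*H*H*H*d0*r*r*r*r*r*r*r*g*g*g*g*g + 24*H*H*H*d0*r*r*r*r*r*r*r*g*g*g*g*g*g*g + 24*H*H*H*p1*p1*d0*r*r*r*r*r*g*g*g*g*g*g*g + 72*H*H*H*H*p2*p2*r*r*g*g - 128*H*H*H*H*p2*p2*r*r*r*r*g*g + 113*H*H*H*H*p2*p2*r*r*r*r*g*g*g*g - 24*H*H*H*H*p2*p2*r*r*r*r*g*g*g*g*g*g - 59*H*H*H*H*p2*p2*r*r*r*r*r*r*g*g*g*g + 60*H*H*H*H*p2*p2*r*r*r*r*r*r*g*g*g*g*g*g + 24*H*H*H*H*p1*p3*r*r*r*r*g*g*g*g - 12*H*H*H*H*p1*p3*r*r*r*r*r*r*g*g*g*g + 12*H*H*H*H*p1*p3*r*r*r*r*r*r*g*g*g*g*g*g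 + 24*H*H*H*H*p1*p1*p2*p2*g*g*g*g - 72*H*H*H*H*p1*p1*p2*p2*r*r*g*g + 72*H*H*H*H*p1*p1*p2*p2*r*r*g*g*g*g + 36*H*H*H*H*p1*p1*p2*p2*r*r*g*g*g*g*g*g - 75*H*H*H*H*p1*p1*p2*p2*r*r*r*r*g*g*g*g + 60*H*H*H*H*p1*p1*p2*p2*r*r*r*r*g*g*g*g*g*g + 12*H*H*H*H*p1*p1*p1*p3*r*r*g*g*g*g*g*g - 16*H*H*H*H*p1*p1*p1*p3*r*r*r*r*g*g*g*g + 12*H*H*H*H*p1*p1*p1*p3*r*r*r*r*g*g*g*g*g*g + 23*H*H*H*H*p1*p1*p1*p1*p2*p2*g*g*g*g - 24*H*H*H*H*p1*p1*p1*p1*p2*p2*g*g*g*g*g*g + 3*H*H*H*H*p1*p1*p1*p1*p2*p2*r*r*g*g*g*g + 60*H*H*H*H*p1*p1*p1*p1*p2*p2*r*r*g*g*g*g*g*g + 12*H*H*H*H*p1*p1*p1*p1*p1*p3*r*r*g*g*g*g*g*g - H*H*H*H*p1*p1*p1*p1*p1*p1*p2*p2*g*g*g*g - 24*H*H*H*H*p1*p1*p1*p1*p1*p1*p2*p2*g*g*g*g*g*g + 48*H*H*H*H*H*d0*r*r*r*r*r*r*r*g*g*g*g*g - 120*H*H*H*H*H*H*p2*p2*r*r*r*r + 308*H*H*H*H*H*H*p2*p2*r*r*r*r*g*g - 108*H*H*H*H*H*H*p2*p2*r*r*r*r*g*g*g*g - 124*H*H*H*H*H*H*p2*p2*r*r*r*r*r*r*g*g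 + 180*H*H*H*H*H*H*p2*p2*r*r*r*r*r*r*g*g*g*g - 16*H*H*H*H*H*H*p1*p3*r*r*r*r*r*r*g*g + 24*H*H*H*H*H*H*p1*p3*r*r*r*r*r*r*g*g*g*g + 144*H*H*H*H*H*H*p1*p1*p2*p2*r*r*g*g - 92*H*H*H*H*H*H*p1*p1*p2*p2*r*r*r*r*g*g + 180*H*H*H*H*H*H*p1*p1*p2*p2*r*r*r*r*g*g*g*g + 24*H*H*H*H*H*H*p1*p1*p1*p3*r*r*r*r*g*g*g*g + 12*H*H*H*H*H*H*p1*p1*p1*p1*p2*p2*g*g*g*g - 36*H*H*H*H*H*H*p1*p1*p1*p1*p2*p2*r*r*g*g + 60*H*H*H*H*H*H*p1*p1*p1*p1*p2*p2*r*r*g*g*g*g + 12*H*H*H*H*H*H*p1*p1*p1*p1*p1*p1*p2*p2*g*g*g*g + 180*H*H*H*H*H*H*H*H*p2*p2*r*r*r*r - 144*H*H*H*H*H*H*H*H*p2*p2*r*r*r*r*g*g - 60*H*H*H*H*H*H*H*H*p2*p2*r*r*r*r*r*r + 180*H*H*H*H*H*H*H*H*p2*p2*r*r*r*r*r*r*g*g + 12*H*H*H*H*H*H*H*H*p1*p3*r*r*r*r*r*r*g*g - 60*H*H*H*H*H*H*H*H*p1*p1*p2*p2*r*r*r*r + 144*H*H*H*H*H*H*H*H*p1*p1*p2*p2*r*r*r*r*g*g + 72*H*H*H*H*H*H*H*H*p1*p1*p1*p1*p2*p2*r*r*g*g - 60*H*H*H*H*H*H*H*H*H*H*p2*p2*r*r*r*r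 + 60*H*H*H*H*H*H*H*H*H*H*p2*p2*r*r*r*r*r*r + 60*H*H*H*H*H*H*H*H*H*H*p1*p1*p2*p2*r*r*r*r) * (p1^2 - (r^2-1)) + (p2*p2*r*r*r*r*g*g*g*g - p2*p2*r*r*r*r*g*g*g*g*g*g + 12*H*d0*r*r*r*r*r*r*r*r*r*g*g*g*g*g + 36*H*H*p2*p2*r*r*r*r*g*g + 15*H*H*p2*p2*r*r*r*r*g*g*g*g - 12*H*H*p2*p2*r*r*r*r*r*r*g*g*g*g + 16*H*H*p1*p3*r*r*r*r*r*r*g*g*g*g + 24*H*H*H*d0*r*r*r*r*r*r*r*r*r*g*g*g*g*g + 60*H*H*H*H*p2*p2*r*r*r*r - 104*H*H*H*H*p2*p2*r*r*r*r*g*g + 24*H*H*H*H*p2*p2*r*r*r*r*g*g*g*g + 108*H*H*H*H*p2*p2*r*r*r*r*r*r*g*g - 84*H*H*H*H*p2*p2*r*r*r*r*r*r*g*g*g*g + 60*H*H*H*H*p2*p2*r*r*r*r*r*r*r*r*g*g*g*g + 16*H*H*H*H*p1*p3*r*r*r*r*r*r*g*g - 12*H*H*H*H*p1*p3*r*r*r*r*r*r*g*g*g*g + 12*H*H*H*H*p1*p3*r*r*r*r*r*r*r*r*g*g*g*g + 24*H*H*H*H*H*d0*r*r*r*r*r*r*r*r*r*g*g*g - 120*H*H*H*H*H*H*p2*p2*r*r*r*r + 84*H*H*H*H*H*H*p2*p2*r*r*r*r*g*g + 120*H*H*H*H*H*H*p2*p2*r*r*r*r*r*r - 204*H*H*H*H*H*H*p2*p2*r*r*r*r*r*r*g*g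 + 120*H*H*H*H*H*H*p2*p2*r*r*r*r*r*r*r*r*g*g - 12*H*H*H*H*H*H*p1*p3*r*r*r*r*r*r*g*g + 12*H*H*H*H*H*H*p1*p3*r*r*r*r*r*r*r*r*g*g + 60*H*H*H*H*H*H*H*H*p2*p2*r*r*r*r - 120*H*H*H*H*H*H*H*H*p2*p2*r*r*r*r*r*r + 60*H*H*H*H*H*H*H*H*p2*p2*r*r*r*r*r*r*r*r) * (H^2 - (1 - g^2))" .
  have z: "(- 4*b0*b0 + 12*a0*d0 + 4*a0*a2 - 144*a0*a0*b0*b0 - 16*a0*a0*a1*a1 - 12*a0*a0*a0*d0 + 8*a0*a0*a0*a2 - 240*a0*a0*a0*a0*b0*b0 - 16*a0*a0*a0*a0*a1*a1 - 24*a0*a0*a0*a0*a0*d0 + 4*a0*a0*a0*a0*a0*a2 + 4*p2*b0 + 44*p2*a0*a0*b0 + 40*p2*a0*a0*a0*a0*b0 - p2*p2 - 2*p2*p2*a0*a0 - p2*p2*a0*a0*a0*a0 - 56*p1*a0*a1*b0 - 32*p1*a0*a0*b1 - 176*p1*a0*a0*a0*a1*b0 - 32*p1*a0*a0*a0*a0*b1 + 12*p1*p2*a0*a1 + 12*p1*p2*a0*a0*a0*a1 - 8*p1*p1*b0*b0 + 24*p1*p1*a0*d0 + 4*p1*p1*a0*a2 - 144*p1*p1*a0*a0*b0*b0 - 52*p1*p1*a0*a0*a1*a1 - 12*p1*p1*a0*a0*a0*d0 + 4*p1*p1*a0*a0*a0*a2 + 4*p1*p1*p2*b0 + 20*p1*p1*p2*a0*a0*b0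 - 56*p1*p1*p1*a0*a1*b0 - 32*p1*p1*p1*a0*a0*b1 - 4*p1*p1*p1*p1*b0*b0 + 12*p1*p1*p1*p1*a0*d0 + 48*H*H*b0*b0 + 12*H*H*a1*a1 + 24*H*H*a0*d0 + 288*H*H*a0*a0*b0*b0 + 24*H*H*a0*a0*a1*a1 + 48*H*H*a0*a0*a0*d0 + 240*H*H*a0*a0*a0*a0*b0*b0 + 12*H*H*a0*a0*a0*a0*a1*a1 + 24*H*H*a0*a0*a0*a0*a0*d0 + 24*H*H*p1*b1 + 192*H*H*p1*a0*a1*b0 + 48*H*H*p1*a0*a0*b1 + 192*H*H*p1*a0*a0*a0*a1*b0 + 24*H*H*p1*a0*a0*a0*a0*b1 + 96*H*H*p1*p1*b0*b0 + 72*H*H*p1*p1*a1*a1 + 48*H*H*p1*p1*a0*d0 + 288*H*H*p1*p1*a0*a0*b0*b0 + 72*H*H*p1*p1*a0*a0*a1*a1 + 48*H*H*p1*p1*a0*a0*a0*d0 + 48*H*H*p1*p1*p1*b1 + 192*H*H*p1*p1*p1*a0*a1*b0 + 48*H*H*p1*p1*p1*a0*a0*b1 + 48*H*H*p1*p1*p1*p1*b0*b0 + 60*H*H*p1*p1*p1*p1*a1*a1 + 24*H*H*p1*p1*p1*p1*a0*d0 + 24*H*H*p1*p1*p1*p1*p1*b1) = 0" unfolding e0[symmetric] pc by simp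
  have r1: "p1^2 - (r^2-1) = 0" using rr by simp
  have r2: "H^2 - (1 - g^2) = 0" using ss by simp
  have "12*H*d0*r^9*g^5 = 0" using c unfolding z r1 r2 by simp
  then show ?thesis using Hn rp sp by simp
qed

lemma Qop_eq:
  fixes \<phi> c1 c2 c3 f1 e1 e2 e3 :: "real \<Rightarrow> real" and I :: "real set"
  assumes oI: "open I" and x: "x \<in> I" and t: "t > 0"
    and Dp: "\<And>y. y \<in> I \<Longrightarrow> (\<phi> has_real_derivative f1 y) (at y)"
    and Dc1: "\<And>y. y \<in> I \<Longrightarrow> (c1 has_real_derivative e1 y) (at y)"
    and Dc2: "\<And>y. y \<in> I \<Longrightarrow> (c2 has_real_derivative e2 y) (at y)"
    and Dc3: "\<And>y. y \<in> I \<Longrightarrow> (c3 has_real_derivative e3 y) (at y)"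
    and Df1: "(f1 has_real_derivative f2x) (at x)"
    and De1: "(e1 has_real_derivative e1') (at x)"
    and De2: "(e2 has_real_derivative e2') (at x)"
    and De3: "(e3 has_real_derivative e3') (at x)"
  shows "Qop H (\<lambda>s t. \<phi> s + c1 s * t + c2 s * t\<^sup>2 + c3 s * t ^ 3 * ln t) x t =
         Qf H (f1 x) f2x (c1 x) (e1 x) e1' (c2 x) (e2 x) e2' (c3 x) (e3 x) e3' t"
proof -
  define u where "u = (\<lambda>s t. \<phi> s + c1 s * t + c2 s * t\<^sup>2 + c3 s * t ^ 3 * ln (t::real))"
  have pd1u: "pd1 u y \<tau> = U1f (f1 y) (e1 y) (e2 y) (e3 y) \<tau>" if y: "y \<in> I" for y \<tau>
    unfolding pd1_def u_def
    by (rule DERIV_imp_deriv) (auto intro!: derivative_eq_intros Dp Dc1 Dc2 Dc3 y simp: U1f_def)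
  have pd11: "pd1 (pd1 u) x t = U1f f2x e1' e2' e3' t"
  proof -
    have "pd1 (pd1 u) x t = deriv (\<lambda>y. U1f (f1 y) (e1 y) (e2 y) (e3 y) t) x"
      unfolding pd1_def[of "pd1 u"]
    proof (rule deriv_cong_ev)
      show "eventually (\<lambda>y. pd1 u y t = U1f (f1 y) (e1 y) (e2 y) (e3 y) t) (nhds x)"
        using eventually_nhds_in_open[OF oI x] by (rule eventually_mono) (simp add: pd1u)
    qed simp
    also have "\<dots> = U1f f2x e1' e2' e3' t"
      unfolding U1f_def
      by (rule DERIV_imp_deriv) (auto intro!: derivative_eq_intros Df1 De1 De2 De3)
    finally show ?thesis .
  qed
  have pd2u: "pd2 u y \<tau> = U2f (c1 y) (c2 y) (c3 y) \<tau>" if tau: "\<tau> > 0" for y \<tau>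
  proof -
    have "((\<lambda>\<tau>. u y \<tau>) has_real_derivative U2f (c1 y) (c2 y) (c3 y) \<tau>) (at \<tau>)"
      unfolding u_def U2f_def
      using tau by (auto intro!: derivative_eq_intros simp: field_simps power2_eq_square power3_eq_cube)
    then show ?thesis unfolding pd2_def by (rule DERIV_imp_deriv)
  qed
  have pd22: "pd2 (pd2 u) x t = U22f (c2 x) (c3 x) t"
  proof -
    have "pd2 (pd2 u) x t = deriv (\<lambda>\<tau>. U2f (c1 x) (c2 x) (c3 x) \<tau>) t"
      unfolding pd2_def[of "pd2 u"]
    proof (rule deriv_cong_ev)
      show "eventually (\<lambda>\<tau>. pd2 u x \<tau> = U2f (c1 x) (c2 x) (c3 x) \<tau>) (nhds t)"
        using eventually_nhds_in_open[of "{0<..}" t] t by (auto elim!: eventually_mono simp: pd2u)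
    qed simp
    also have "\<dots> = U22f (c2 x) (c3 x) t"
    proof (rule DERIV_imp_deriv)
      show "((\<lambda>\<tau>. U2f (c1 x) (c2 x) (c3 x) \<tau>) has_real_derivative U22f (c2 x) (c3 x) t) (at t)"
        unfolding U2f_def U22f_def
        using t by (auto intro!: derivative_eq_intros simp: field_simps power2_eq_square power3_eq_cube)
    qed
    finally show ?thesis .
  qed
  have pd21: "pd2 (pd1 u) x t = U2f (e1 x) (e2 x) (e3 x) t"
  proof -
    have "pd2 (pd1 u) x t = deriv (\<lambda>\<tau>. U1f (f1 x) (e1 x) (e2 x) (e3 x) \<tau>) t"
    proof -
      have "pd1 u x = U1f (f1 x) (e1 x) (e2 x) (e3 x)" by (rule ext) (simp add: pd1u[OF x])
      then show ?thesis unfolding pd2_def by simp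
    qed
    also have "\<dots> = U2f (e1 x) (e2 x) (e3 x) t"
    proof (rule DERIV_imp_deriv)
      show "((\<lambda>\<tau>. U1f (f1 x) (e1 x) (e2 x) (e3 x) \<tau>) has_real_derivative U2f (e1 x) (e2 x) (e3 x) t) (at t)"
        unfolding U1f_def U2f_def
        using t by (auto intro!: derivative_eq_intros simp: field_simps power2_eq_square power3_eq_cube)
    qed
    finally show ?thesis .
  qed
  have pd12: "pd1 (pd2 u) x t = U2f (e1 x) (e2 x) (e3 x) t"
  proof -
    have "pd1 (pd2 u) x t = deriv (\<lambda>y. U2f (c1 y) (c2 y) (c3 y) t) x"
    proof -
      have "(\<lambda>y. pd2 u y t) = (\<lambda>y. U2f (c1 y) (c2 y) (c3 y) t)" by (rule ext) (simp add: pd2u[OF t])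
      then show ?thesis unfolding pd1_def by simp
    qed
    also have "\<dots> = U2f (e1 x) (e2 x) (e3 x) t"
      unfolding U2f_def
      by (rule DERIV_imp_deriv) (auto intro!: derivative_eq_intros Dc1 Dc2 Dc3 x)
    finally show ?thesis .
  qed
  show ?thesis
    unfolding u_def[symmetric] Qop_def Qf_def Let_def
    by (simp only: pd11 pd22 pd21 pd12 pd1u[OF x] pd2u[OF t])
qed


theorem proposition2p2:
  fixes H :: real and \<phi> c1 c2 c31 :: "real \<Rightarrow> real"
  assumes "\<bar>H\<bar> < 1"
    and "Ck_on 5 \<phi> {-1<..<1}"
    and "Ck_on 2 c1 {-1<..<1}" and "Ck_on 2 c2 {-1<..<1}" and "Ck_on 2 c31 {-1<..<1}"
    and "\<forall>x1\<in>{-1<..<1}.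
           (\<lambda>x2. Qop H (\<lambda>s t. \<phi> s + c1 s * t + c2 s * t\<^sup>2 + c31 s * t ^ 3 * ln t) x1 x2)
             \<in> o[at_right 0](\<lambda>x2. x2)"
  shows "\<forall>x1\<in>{-1<..<1}. c31 x1 = 0"
proof -
  define I where "I = {-1<..<(1::real)}"
  have oI: "open I" unfolding I_def by simp
  define f1 where "f1 = deriv \<phi>"
  define f2 where "f2 = deriv f1"
  define f3 where "f3 = deriv f2"
  define s where "s = sqrt (1 - H^2)"
  define K where "K = H / s"
  define r where "r y = sqrt (1 + (f1 y)^2)" for y
  have H2: "H^2 < 1" using assms(1) by (simp add: abs_square_less_1)
  have sp: "s > 0" unfolding s_def using H2 by simp
  have ss: "s^2 = 1 - H^2" unfolding s_def using H2 by simp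
  have rp: "r y > 0" for y unfolding r_def by (simp add: add_pos_nonneg)
  have pos1: "1 + (f1 y)^2 > 0" for y by (simp add: add_pos_nonneg)
  have rr: "(r y)^2 = 1 + (f1 y)^2" for y unfolding r_def by (simp add: add_nonneg_nonneg)
  have dp: "(deriv ^^ j) \<phi> differentiable (at x)" if "j < 5" "x \<in> I" for j x
    using assms(2) that unfolding Ck_on_def I_def by blast
  have dc1: "(deriv ^^ j) c1 differentiable (at x)" if "j < 2" "x \<in> I" for j x
    using assms(3) that unfolding Ck_on_def I_def by blast
  have dc2: "(deriv ^^ j) c2 differentiable (at x)" if "j < 2" "x \<in> I" for j x
    using assms(4) that unfolding Ck_on_def I_def by blast
  have dc3: "(deriv ^^ j) c31 differentiable (at x)" if "j < 2" "x \<in> I" for j x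
    using assms(5) that unfolding Ck_on_def I_def by blast
  have Dp: "(\<phi> has_real_derivative f1 x) (at x)" if "x \<in> I" for x
    using dp[of 0 x] that by (simp add: f1_def DERIV_deriv_iff_real_differentiable)
  have Df1: "(f1 has_real_derivative f2 x) (at x)" if "x \<in> I" for x
    using dp[of 1 x] that by (simp add: f1_def f2_def DERIV_deriv_iff_real_differentiable)
  have Df2: "(f2 has_real_derivative f3 x) (at x)" if "x \<in> I" for x
    using dp[of 2 x] that by (simp add: f1_def f2_def f3_def numeral_2_eq_2 DERIV_deriv_iff_real_differentiable)
  have Dc1: "(c1 has_real_derivative deriv c1 x) (at x)" if "x \<in> I" for x
    using dc1[of 0 x] that by (simp add: DERIV_deriv_iff_real_differentiable)
  have Dc1': "(deriv c1 has_real_derivative deriv (deriv c1) x) (at x)" if "x \<in> I" for x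
    using dc1[of 1 x] that by (simp add: DERIV_deriv_iff_real_differentiable)
  have Dc2: "(c2 has_real_derivative deriv c2 x) (at x)" if "x \<in> I" for x
    using dc2[of 0 x] that by (simp add: DERIV_deriv_iff_real_differentiable)
  have Dc2': "(deriv c2 has_real_derivative deriv (deriv c2) x) (at x)" if "x \<in> I" for x
    using dc2[of 1 x] that by (simp add: DERIV_deriv_iff_real_differentiable)
  have Dc3: "(c31 has_real_derivative deriv c31 x) (at x)" if "x \<in> I" for x
    using dc3[of 0 x] that by (simp add: DERIV_deriv_iff_real_differentiable)
  have Dc3': "(deriv c31 has_real_derivative deriv (deriv c31) x) (at x)" if "x \<in> I" for x
    using dc3[of 1 x] that by (simp add: DERIV_deriv_iff_real_differentiable)
  have A: "((\<lambda>t. Qf H (f1 x) (f2 x) (c1 x) (deriv c1 x) (deriv (deriv c1) x) (c2 x) (deriv c2 x)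
      (deriv (deriv c2) x) (c31 x) (deriv c31 x) (deriv (deriv c31) x) t / t) \<longlongrightarrow> 0) (at_right 0)"
    if x: "x \<in> I" for x
  proof -
    have "(\<lambda>x2. Qop H (\<lambda>s t. \<phi> s + c1 s * t + c2 s * t\<^sup>2 + c31 s * t ^ 3 * ln t) x x2) \<in> o[at_right 0](\<lambda>x2. x2)"
      using assms(6) x unfolding I_def by blast
    from smalloD_tendsto[OF this]
    have l: "((\<lambda>t. Qop H (\<lambda>s t. \<phi> s + c1 s * t + c2 s * t\<^sup>2 + c31 s * t ^ 3 * ln t) x t / t) \<longlongrightarrow> 0) (at_right 0)" .
    show ?thesis
    proof (rule Lim_transform_eventually[OF l])
      show "eventually (\<lambda>t. Qop H (\<lambda>s t. \<phi> s + c1 s * t + c2 s * t\<^sup>2 + c31 s * t ^ 3 * ln t) x t / t =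
        Qf H (f1 x) (f2 x) (c1 x) (deriv c1 x) (deriv (deriv c1) x) (c2 x) (deriv c2 x)
      (deriv (deriv c2) x) (c31 x) (deriv c31 x) (deriv (deriv c31) x) t / t) (at_right 0)"
        using eventually_at_right_less[of "0::real"]
      proof (rule eventually_mono)
        fix t :: real assume t: "0 < t"
        show "Qop H (\<lambda>s t. \<phi> s + c1 s * t + c2 s * t\<^sup>2 + c31 s * t ^ 3 * ln t) x t / t =
        Qf H (f1 x) (f2 x) (c1 x) (deriv c1 x) (deriv (deriv c1) x) (c2 x) (deriv c2 x)
      (deriv (deriv c2) x) (c31 x) (deriv c31 x) (deriv (deriv c31) x) t / t"
          by (subst Qop_eq[OF oI x t Dp Dc1 Dc2 Dc3 Df1[OF x] Dc1'[OF x] Dc2'[OF x] Dc3'[OF x]]) simp_all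
      qed
    qed
  qed
  have Dr: "((\<lambda>y. sqrt (1 + (f1 y)^2)) has_real_derivative f1 x * f2 x / r x) (at x)" if x: "x \<in> I" for x
  proof -
    have d1: "((\<lambda>y. 1 + (f1 y)^2) has_real_derivative 2 * f1 x * f2 x) (at x)"
      by (auto intro!: derivative_eq_intros Df1[OF x])
    have "((\<lambda>y. sqrt (1 + (f1 y)^2)) has_real_derivative (inverse (sqrt (1 + (f1 x)^2)) / 2) * (2 * f1 x * f2 x)) (at x)"
      using DERIV_chain2[OF DERIV_real_sqrt[OF pos1[of x]] d1] .
    moreover have "(inverse (sqrt (1 + (f1 x)^2)) / 2) * (2 * f1 x * f2 x) = f1 x * f2 x / r x"
      unfolding r_def by (simp add: field_simps)
    ultimately show ?thesis by simp
  qed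
  have c1form: "c1 y = K * r y" if y: "y \<in> I" for y
    using alg1[OF assms(1) asym(1)[OF A[OF y]]] unfolding K_def s_def r_def by simp
  have dc1v: "deriv c1 y = K * (f1 y * f2 y / r y)" if y: "y \<in> I" for y
  proof -
    have "((\<lambda>y. K * sqrt (1 + (f1 y)^2)) has_real_derivative K * (f1 y * f2 y / r y)) (at y)"
      using DERIV_cmult[OF Dr[OF y], of K] by simp
    then have "(c1 has_real_derivative K * (f1 y * f2 y / r y)) (at y)"
      by (rule has_field_derivative_transform_within_open[OF _ oI y]) (simp add: c1form r_def)
    then show ?thesis by (rule DERIV_imp_deriv)
  qed
  have d2c1v: "deriv (deriv c1) x = K * ((f2 x * f2 x + f1 x * f3 x) / r x - f1 x * f1 x * f2 x * f2 x / (r x)^3)"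
    if x: "x \<in> I" for x
  proof -
    have "deriv (deriv c1) x = deriv (\<lambda>y. K * (f1 y * f2 y / sqrt (1 + (f1 y)^2))) x"
    proof (rule deriv_cong_ev)
      show "eventually (\<lambda>y. deriv c1 y = K * (f1 y * f2 y / sqrt (1 + (f1 y)^2))) (nhds x)"
        using eventually_nhds_in_open[OF oI x] by (rule eventually_mono) (simp add: dc1v r_def)
    qed simp
    also have "\<dots> = K * ((f2 x * f2 x + f1 x * f3 x) / r x - f1 x * f1 x * f2 x * f2 x / (r x)^3)"
    proof (rule DERIV_imp_deriv)
      have r2: "(sqrt (1 + (f1 x)^2))^2 = 1 + (f1 x)^2" by (simp add: add_nonneg_nonneg)
      show "((\<lambda>y. K * (f1 y * f2 y / sqrt (1 + (f1 y)^2))) has_real_derivative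
          K * ((f2 x * f2 x + f1 x * f3 x) / r x - f1 x * f1 x * f2 x * f2 x / (r x)^3)) (at x)"
      proof -
        have rx: "sqrt (1 + (f1 x)^2) \<noteq> 0" using rp[of x] unfolding r_def by simp
        have "((\<lambda>y. K * (f1 y * f2 y / sqrt (1 + (f1 y)^2))) has_real_derivative
          K * (((f2 x * f2 x + f3 x * f1 x) * sqrt (1 + (f1 x)^2) - f1 x * f2 x * (f1 x * f2 x / r x)) /
            (sqrt (1 + (f1 x)^2) * sqrt (1 + (f1 x)^2)))) (at x)"
          using DERIV_cmult[OF DERIV_divide[OF DERIV_mult[OF Df1[OF x] Df2[OF x]] Dr[OF x] rx], of K]
          by (simp add: algebra_simps)
        moreover have "K * (((f2 x * f2 x + f3 x * f1 x) * sqrt (1 + (f1 x)^2) - f1 x * f2 x * (f1 x * f2 x / r x)) /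
            (sqrt (1 + (f1 x)^2) * sqrt (1 + (f1 x)^2))) =
          K * ((f2 x * f2 x + f1 x * f3 x) / r x - f1 x * f1 x * f2 x * f2 x / (r x)^3)"
          using rp[of x] unfolding r_def[symmetric] by (simp add: field_simps power3_eq_cube)
        ultimately show ?thesis by simp
      qed
    qed
    finally show ?thesis .
  qed
  show ?thesis
  proof
    fix x assume xI: "x \<in> {-1<..<(1::real)}"
    then have x: "x \<in> I" unfolding I_def .
    note as = asym[OF A[OF x]]
    show "c31 x = 0"
    proof (cases "H = 0")
      case True
      then have K0: "K = 0" unfolding K_def by simp
      have "c1 x = 0" "deriv c1 x = 0" "deriv (deriv c1) x = 0"
        using c1form[OF x] dc1v[OF x] d2c1v[OF x] K0 by simp_all
      then have "(1 + f1 x * f1 x) * c31 x = 0" using as(4)[OF True] by (simp add: algebra_simps)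
      moreover have "1 + f1 x * f1 x > 0" by (simp add: add_pos_nonneg)
      ultimately show ?thesis by simp
    next
      case False
      have h0: "s * c1 y = H * r y" if y: "y \<in> I" for y
        using c1form[OF y] sp unfolding K_def by simp
      have h1: "s * r y * deriv c1 y = H * f1 y * f2 y" if y: "y \<in> I" for y
        using dc1v[OF y] sp rp[of y] unfolding K_def by (simp add: field_simps)
      have c2e: "2 * s^2 * (r y)^2 * c2 y = f2 y * (1 + H^2 * (f1 y)^2)" if y: "y \<in> I" for y
        by (rule alg2[OF h0[OF y] h1[OF y] rr ss False rp asym(2)[OF A[OF y]]])
      have c2form: "c2 y = f2 y * (1 + H^2 * (f1 y)^2) / (2 * (1 - H^2) * (1 + (f1 y)^2))" if y: "y \<in> I" for y
      proof -
        have "(1 - H^2) > 0" using H2 by simp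
        then have D: "2 * (1 - H^2) * (1 + (f1 y)^2) \<noteq> 0" using pos1[of y] by simp
        have "2 * (1 - H^2) * (1 + (f1 y)^2) * c2 y = f2 y * (1 + H^2 * (f1 y)^2)"
          using c2e[OF y] unfolding ss rr .
        then have "c2 y * (2 * (1 - H^2) * (1 + (f1 y)^2)) = f2 y * (1 + H^2 * (f1 y)^2)"
          by (simp only: mult.commute)
        then show ?thesis using D by (simp add: eq_divide_eq)
      qed
      define XX where "XX = f3 x * (1 + H^2 * (f1 x)^2) + H^2 * (2 * f1 x * f2 x) * f2 x"
      define YY where "YY = f2 x * (1 + H^2 * (f1 x)^2)"
      define ZZ where "ZZ = 2 * f1 x * f2 x"
      define AA where "AA = 1 - H^2"
      define BB where "BB = 1 + (f1 x)^2"
      define b1 where "b1 = (XX * BB - YY * ZZ) / (2 * AA * BB^2)"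
      have AA: "AA \<noteq> 0" using H2 unfolding AA_def by simp
      have BB: "BB \<noteq> 0" using pos1[of x] unfolding BB_def by simp
      have dc2v: "deriv c2 x = b1"
      proof -
        have hp: "1 - H^2 > 0" using H2 by simp
        have rp1: "1 + (f1 x)^2 > 0" by (simp add: add_pos_nonneg)
        have dA: "((\<lambda>y. 1 + H^2 * (f1 y)^2) has_real_derivative H^2 * (2 * f1 x * f2 x)) (at x)"
          by (auto intro!: derivative_eq_intros Df1[OF x] simp: algebra_simps)
        have dD: "((\<lambda>y. 2 * (1 - H^2) * (1 + (f1 y)^2)) has_real_derivative 2 * (1 - H^2) * (2 * f1 x * f2 x)) (at x)"
          by (auto intro!: derivative_eq_intros Df1[OF x] simp: algebra_simps)
        have nz: "2 * (1 - H^2) * (1 + (f1 x)^2) \<noteq> 0" using hp rp1 by simp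
        have "((\<lambda>y. f2 y * (1 + H^2 * (f1 y)^2) / (2 * (1 - H^2) * (1 + (f1 y)^2))) has_real_derivative
          ((f3 x * (1 + H^2 * (f1 x)^2) + H^2 * (2 * f1 x * f2 x) * f2 x) * (2 * (1 - H^2) * (1 + (f1 x)^2))
           - f2 x * (1 + H^2 * (f1 x)^2) * (2 * (1 - H^2) * (2 * f1 x * f2 x)))
          / ((2 * (1 - H^2) * (1 + (f1 x)^2)) * (2 * (1 - H^2) * (1 + (f1 x)^2)))) (at x)"
          using DERIV_divide[OF DERIV_mult[OF Df2[OF x] dA] dD nz] by (simp add: algebra_simps)
        moreover have "((f3 x * (1 + H^2 * (f1 x)^2) + H^2 * (2 * f1 x * f2 x) * f2 x) * (2 * (1 - H^2) * (1 + (f1 x)^2))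
           - f2 x * (1 + H^2 * (f1 x)^2) * (2 * (1 - H^2) * (2 * f1 x * f2 x)))
          / ((2 * (1 - H^2) * (1 + (f1 x)^2)) * (2 * (1 - H^2) * (1 + (f1 x)^2))) = b1"
          unfolding b1_def XX_def[symmetric] unfolding YY_def[symmetric] unfolding ZZ_def[symmetric] AA_def[symmetric] BB_def[symmetric]
          using AA BB by (simp add: field_simps power2_eq_square)
        ultimately have "((\<lambda>y. f2 y * (1 + H^2 * (f1 y)^2) / (2 * (1 - H^2) * (1 + (f1 y)^2))) has_real_derivative b1) (at x)"
          by simp
        then have "(c2 has_real_derivative b1) (at x)"
          by (rule has_field_derivative_transform_within_open[OF _ oI x]) (simp add: c2form)
        then show ?thesis by (rule DERIV_imp_deriv)
      qed
      have h2: "s * r x * r x * r x * deriv (deriv c1) x =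
          H * ((f2 x * f2 x + f1 x * f3 x) * r x * r x - f1 x * f1 x * f2 x * f2 x)"
      proof -
        have sK: "s * K = H" using sp unfolding K_def by simp
        have ac: "s * R * R * R * (K * Z) = (s * K) * (R * R * R * Z)" for R Z :: real by (simp add: ac_simps)
        have e: "R * R * R * (P / R - Q / R^3) = P * R * R - Q" if "R \<noteq> 0" for R P Q :: real
          using that by (simp add: field_simps power3_eq_cube)
        have "s * r x * r x * r x * deriv (deriv c1) x = H * (r x * r x * r x * ((f2 x * f2 x + f1 x * f3 x) / r x - f1 x * f1 x * f2 x * f2 x / (r x)^3))"
          unfolding d2c1v[OF x] ac sK ..
        also have "\<dots> = H * ((f2 x * f2 x + f1 x * f3 x) * r x * r x - f1 x * f1 x * f2 x * f2 x)"
          using rp[of x] by (simp add: e)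
        finally show ?thesis .
      qed
      have h3: "2 * s * s * r x * r x * c2 x = f2 x * (1 + H * H * f1 x * f1 x)"
        using c2e[OF x] by (simp add: power2_eq_square algebra_simps)
      have h4: "2 * s * s * r x * r x * r x * r x * deriv c2 x =
          (f3 x * (1 + H * H * f1 x * f1 x) + 2 * H * H * f1 x * f2 x * f2 x) * r x * r x
          - 2 * f1 x * f2 x * f2 x * (1 + H * H * f1 x * f1 x)"
      proof -
        have e1: "s * s = 1 - H^2" using ss by (simp add: power2_eq_square)
        have e2: "r x * r x = 1 + (f1 x)^2" using rr[of x] by (simp add: power2_eq_square)
        have hp: "1 - H^2 > 0" using H2 by simp
        have rp1: "1 + (f1 x)^2 > 0" by (simp add: add_pos_nonneg)
        have "2 * s * s * r x * r x * r x * r x * deriv c2 x = 2 * (s * s) * (r x * r x) * (r x * r x) * b1"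
          by (simp only: dc2v mult.assoc)
        also have "\<dots> = 2 * AA * BB * BB * b1" unfolding e1 e2 AA_def BB_def ..
        also have "\<dots> = XX * BB - YY * ZZ" unfolding b1_def using AA BB by (simp add: field_simps power2_eq_square)
        also have "\<dots> = XX * (r x * r x) - YY * ZZ" unfolding BB_def e2 ..
        also have "\<dots> = (f3 x * (1 + H * H * f1 x * f1 x) + 2 * H * H * f1 x * f2 x * f2 x) * r x * r x
          - 2 * f1 x * f2 x * f2 x * (1 + H * H * f1 x * f1 x)"
          unfolding XX_def YY_def ZZ_def by (simp add: algebra_simps power2_eq_square)
        finally show ?thesis .
      qed
      show ?thesis
        by (rule alg3[OF h0[OF x] h1[OF x] h2 h3 h4 rr ss False rp sp as(3)])
    qed
  qed
qed

end
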